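(* Let $\Sigma(s,l)$ be a continuous function of $s\in\mathbb R$ and future null vectors $l=o\bar o$, homogeneous in the sense $\Sigma(\alpha\bar\alpha s,\alpha o,\bar\alpha\bar o)=(\alpha\bar\alpha)^{-2}\Sigma(s,o,\bar o)$, such that $|\Sigma(s,l)|$ is bounded by a polynomial in $s$ (in the $t$-gauge for some unit timelike future-pointing $t$), and such that $$\int\Sigma(x\cdot l,l)\,d^2l=0\qquad\text{for all points }x\text{ of Minkowski space}.$$ Then $\Sigma(s,l)=\sum_{k=0}^N s^k\Sigma_k(l)$ for some $N<\infty$, and for each $k$, $\int l_{a_1}\cdots l_{a_k}\Sigma_k(l)\,d^2l=0$.
   Context: Minkowski space with signature $(+,-,-,-)$; null vectors $l^a=o^A\bar o^{A'}$ parametrized by spinors, functions invariant under $o\mapsto e^{i\theta}o$; the $t$-gauge means $t\cdot l=1$. For $g$ homogeneous of degree $-2$ in $l$, $\int g\,d^2l$ is the integral over the unit sphere $\{t\cdot l=1\}$ with the rotation-invariant area measure, independent of $t$. *)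

theory Defs
  imports "HOL-Analysis.Analysis" "HOL-Computational_Algebra.Polynomial"
begin

definition mdot :: "real^4 \<Rightarrow> real^4 \<Rightarrow> real" where
  "mdot x y = x$1 * y$1 - x$2 * y$2 - x$3 * y$3 - x$4 * y$4"

definition future_null :: "(real^4) set" where
  "future_null = {l. mdot l l = 0 \<and> l$1 > 0}"

definition unit_future_timelike :: "real^4 \<Rightarrow> bool" where
  "unit_future_timelike t \<longleftrightarrow> mdot t t = 1 \<and> t$1 > 0"

text \<open>Lowered component l_a = eta_ab l^b.\<close>
definition lower :: "real^4 \<Rightarrow> 4 \<Rightarrow> real" where
  "lower l a = (if a = 1 then l$a else - (l$a))"

definition sph :: "real \<Rightarrow> real \<Rightarrow> real^4" where
  "sph \<theta> \<phi> = vector [1, sin \<theta> * cos \<phi>, sin \<theta> * sin \<phi>, cos \<theta>]"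

text \<open>\<open>\<integral> g d^2l\<close>: integral over the unit sphere {t.l = 1}, t = (1,0,0,0),
  with the rotation-invariant area measure sin\<theta> d\<theta> d\<phi>.\<close>
definition null_int :: "(real^4 \<Rightarrow> complex) \<Rightarrow> complex" where
  "null_int g = integral {0..pi} (\<lambda>\<theta>. integral {0..2*pi}
      (\<lambda>\<phi>. complex_of_real (sin \<theta>) * g (sph \<theta> \<phi>)))"

end

theory Submission
  imports Defs "HOL-Computational_Algebra.Polynomial"
begin


definition sbox :: "(real \<times> real) set" where "sbox = cbox (0,0) (pi, 2*pi)"
definition Lz :: "real \<times> real \<Rightarrow> real^4" where "Lz z = sph (fst z) (snd z)"
definition Iz :: "(real \<times> real \<Rightarrow> complex) \<Rightarrow> complex" where
  "Iz h = integral sbox (\<lambda>z. complex_of_real (sin (fst z)) * h z)"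
definition ell :: "real^4 \<Rightarrow> real \<times> real \<Rightarrow> real" where "ell x z = mdot x (Lz z)"

lemma sph_comp: "sph t p $ 1 = 1" "sph t p $ 2 = sin t * cos p" "sph t p $ 3 = sin t * sin p" "sph t p $ 4 = cos t"
  by (simp_all add: sph_def vector_def)

lemma Lz_eq: "Lz z = (\<chi> i. if i = 1 then 1 else if i = 2 then sin (fst z) * cos (snd z)
   else if i = 3 then sin (fst z) * sin (snd z) else cos (fst z))"
  unfolding Lz_def vec_eq_iff forall_4 by (simp add: sph_comp)

lemma continuous_Lz: "continuous_on S Lz"
  unfolding Lz_eq
proof (rule continuous_on_vec_lambda)
  fix i :: 4
  show "continuous_on S (\<lambda>x. if i = 1 then 1 else if i = 2 then sin (fst x) * cos (snd x)
   else if i = 3 then sin (fst x) * sin (snd x) else cos (fst x))"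
    by (cases "i = 1"; cases "i = 2"; cases "i = 3") (auto intro!: continuous_intros)
qed

lemma ell_eq: "ell x z = x$1 - x$2 * (sin (fst z) * cos (snd z)) - x$3 * (sin (fst z) * sin (snd z)) - x$4 * cos (fst z)"
  by (simp add: ell_def mdot_def Lz_def sph_comp)

lemma continuous_ell: "continuous_on S (ell x)"
  unfolding ell_eq[abs_def] by (intro continuous_intros)

lemma continuous_on_ell_comp[continuous_intros]:
  fixes g :: "'a::t2_space \<Rightarrow> real \<times> real"
  assumes "continuous_on S g" shows "continuous_on S (\<lambda>p. ell v (g p))"
  unfolding ell_eq using assms by (auto intro!: continuous_intros)

lemma ell_add: "ell (x + t *\<^sub>R v) z = ell x z + t * ell v z"
  by (simp add: ell_eq algebra_simps)

lemma Lz_null: "Lz z \<in> future_null"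
proof -
  have e1: "(sin (fst z) * cos (snd z))^2 + (sin (fst z) * sin (snd z))^2 = (sin (fst z))^2 * ((sin (snd z))^2 + (cos (snd z))^2)"
    by algebra
  have e2: "(sin (snd z))^2 + (cos (snd z))^2 = 1" by (rule sin_cos_squared_add)
  have e3: "(sin (fst z))^2 + (cos (fst z))^2 = 1" by (rule sin_cos_squared_add)
  from e1 e2 e3 have "(sin (fst z) * cos (snd z))^2 + (sin (fst z) * sin (snd z))^2 + (cos (fst z))^2 = 1"
    by simp
  then show ?thesis by (simp add: future_null_def mdot_def Lz_def sph_comp power2_eq_square algebra_simps)
qed

lemma Lz_1: "Lz z $ 1 = 1" by (simp add: Lz_def sph_comp)

lemma null_int_Iz:
  assumes "continuous_on sbox (\<lambda>z. g (Lz z))"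
  shows "null_int g = Iz (\<lambda>z. g (Lz z))"
proof -
  have c: "continuous_on (cbox (0,0) (pi, 2*pi)) (\<lambda>z. complex_of_real (sin (fst z)) * g (Lz z))"
    using assms unfolding sbox_def by (intro continuous_intros) auto
  show ?thesis
    unfolding Iz_def null_int_def sbox_def integral_prod_continuous[OF c]
    by (simp add: cbox_interval Lz_def)
qed

lemma integrable_sbox: fixes f :: "real \<times> real \<Rightarrow> 'a::banach" shows "continuous_on sbox f \<Longrightarrow> f integrable_on sbox"
  unfolding sbox_def by (rule integrable_continuous)

lemma step:
  fixes F F' :: "real \<Rightarrow> real \<times> real \<Rightarrow> complex" and Q :: "real \<times> real \<Rightarrow> complex"
  assumes cF: "continuous_on (UNIV \<times> sbox) (\<lambda>(s,z). F s z)"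
   and cF': "continuous_on (UNIV \<times> sbox) (\<lambda>(s,z). F' s z)"
   and dF: "\<And>s z. z \<in> sbox \<Longrightarrow> ((\<lambda>s. F s z) has_vector_derivative F' s z) (at s)"
   and cQ: "continuous_on sbox Q"
   and V: "\<And>x. Iz (\<lambda>z. Q z * F (ell x z) z) = 0"
  shows "Iz (\<lambda>z. Q z * (of_real (ell v z) * F' (ell x z) z)) = 0"
proof -
  define f where "f t z = of_real (sin (fst z)) * (Q z * F (ell x z + t * ell v z) z)" for t z
  define fx where "fx t z = of_real (sin (fst z)) * (Q z * (of_real (ell v z) * F' (ell x z + t * ell v z) z))" for t z
  have E0: "integral sbox (f t) = 0" for t
    using V[of "x + t *\<^sub>R v"] unfolding Iz_def f_def ell_add by simp
  have cmap: "continuous_on (UNIV \<times> sbox) (\<lambda>(t, z). (ell x z + t * ell v z, z))"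
    unfolding ell_eq case_prod_beta by (intro continuous_intros)
  have sub: "(\<lambda>(t, z). (ell x z + t * ell v z, z)) ` (UNIV \<times> sbox) \<subseteq> UNIV \<times> sbox" by auto
  have cF'': "continuous_on (UNIV \<times> sbox) (\<lambda>(t, z). F' (ell x z + t * ell v z) z)"
    using continuous_on_compose2[OF cF' cmap sub] by (simp add: case_prod_beta)
  have cF2: "continuous_on (UNIV \<times> sbox) (\<lambda>(t, z). F (ell x z + t * ell v z) z)"
    using continuous_on_compose2[OF cF cmap sub] by (simp add: case_prod_beta)
  have d: "((\<lambda>t. integral (cbox (0,0) (pi,2*pi)) (f t)) has_vector_derivative integral (cbox (0,0) (pi,2*pi)) (fx 0)) (at 0 within UNIV)"
  proof (rule leibniz_rule_vector_derivative)
    fix t :: real and z assume z: "z \<in> cbox (0,0) (pi, 2*pi)"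
    have "((\<lambda>t. ell x z + t * ell v z) has_vector_derivative ell v z) (at t)"
      by (auto intro!: derivative_eq_intros simp: has_real_derivative_iff_has_vector_derivative[symmetric])
    from vector_diff_chain_at[OF this dF[of z "ell x z + t * ell v z"]] z
    have "((\<lambda>t. F (ell x z + t * ell v z) z) has_vector_derivative ell v z *\<^sub>R F' (ell x z + t * ell v z) z) (at t)"
      by (simp add: o_def sbox_def)
    then show "((\<lambda>t. f t z) has_vector_derivative fx t z) (at t within UNIV)"
      unfolding f_def fx_def by (auto intro!: derivative_eq_intros simp: scaleR_conv_of_real)
  next
    fix t :: real assume "t \<in> UNIV"
    show "f t integrable_on cbox (0,0) (pi,2*pi)"
      unfolding f_def
      by (rule integrable_continuous, intro continuous_intros cQ[unfolded sbox_def]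
          continuous_on_compose2[OF cF2, where f="\<lambda>z. (t, z)", simplified, unfolded sbox_def]) (auto simp: sbox_def)
  next
    show "continuous_on (UNIV \<times> cbox (0,0) (pi,2*pi)) (\<lambda>(t, z). fx t z)"
    proof -
      have cQ2: "continuous_on (UNIV \<times> sbox) (\<lambda>p. Q (snd p))"
        by (rule continuous_on_compose2[OF cQ continuous_on_snd]) auto
      have cF3: "continuous_on (UNIV \<times> sbox) (\<lambda>p. F' (ell x (snd p) + fst p * ell v (snd p)) (snd p))"
        using cF'' by (simp add: case_prod_beta)
      show ?thesis
        unfolding fx_def case_prod_beta sbox_def[symmetric] by (intro continuous_intros cQ2 cF3)
    qed
  qed auto
  have "((\<lambda>t. integral (cbox (0,0) (pi,2*pi)) (f t)) has_vector_derivative 0) (at 0)"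
    using E0 unfolding sbox_def by simp
  with d have "integral (cbox (0,0) (pi,2*pi)) (fx 0) = 0"
    using vector_derivative_unique_at by auto
  then show ?thesis unfolding fx_def Iz_def sbox_def by simp
qed


definition Dl :: "real \<Rightarrow> (real \<Rightarrow> 'a \<Rightarrow> complex) \<Rightarrow> real \<Rightarrow> 'a \<Rightarrow> complex" where
  "Dl h F = (\<lambda>s z. F (s + h) z - F s z)"
definition Dls :: "real list \<Rightarrow> (real \<Rightarrow> 'a \<Rightarrow> complex) \<Rightarrow> real \<Rightarrow> 'a \<Rightarrow> complex" where
  "Dls hs F = foldr Dl hs F"
definition Sh :: "real \<Rightarrow> (real \<Rightarrow> 'a \<Rightarrow> complex) \<Rightarrow> real \<Rightarrow> 'a \<Rightarrow> complex" where
  "Sh h F = (\<lambda>s z. integral {s..s+h} (\<lambda>\<sigma>. F \<sigma> z))"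
definition contF :: "(real \<Rightarrow> real \<times> real \<Rightarrow> complex) \<Rightarrow> bool" where
  "contF F \<longleftrightarrow> continuous_on (UNIV \<times> sbox) (\<lambda>(s,z). F s z)"
definition VQ :: "(real \<times> real \<Rightarrow> complex) \<Rightarrow> (real \<Rightarrow> real \<times> real \<Rightarrow> complex) \<Rightarrow> bool" where
  "VQ Q F \<longleftrightarrow> (\<forall>x. Iz (\<lambda>z. Q z * F (ell x z) z) = 0)"
definition prodf :: "(real^4) list \<Rightarrow> real \<times> real \<Rightarrow> real" where
  "prodf vs z = prod_list (map (\<lambda>v. ell v z) vs)"
definition e0 :: "real^4" where "e0 = vector [1,0,0,0]"

lemma ell_e0: "ell e0 z = 1"
  by (simp add: ell_eq e0_def vector_def)

lemma Dls_Nil[simp]: "Dls [] F = F" by (simp add: Dls_def)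
lemma Dls_Cons: "Dls (h # hs) F = Dl h (Dls hs F)" by (simp add: Dls_def)

lemma Dl_commute: "Dl h (Dl k F) = Dl k (Dl h F)"
  by (simp add: Dl_def algebra_simps add_ac)

lemma Dls_Dl: "Dl h (Dls hs F) = Dls hs (Dl h F)"
  by (induction hs) (simp_all add: Dls_Cons Dl_commute)

lemma contF_comp:
  assumes "contF F" "continuous_on S g" "continuous_on S k" "\<And>p. p \<in> S \<Longrightarrow> k p \<in> sbox"
  shows "continuous_on S (\<lambda>p. F (g p) (k p))"
proof -
  have "continuous_on S (\<lambda>p. (\<lambda>(s,z). F s z) (g p, k p))"
    by (rule continuous_on_compose2[OF assms(1)[unfolded contF_def]]) (use assms in \<open>auto intro: continuous_on_Pair\<close>)
  then show ?thesis by simp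
qed

lemma contF_Dl: assumes "contF F" shows "contF (Dl h F)"
proof -
  have c: "continuous_on (UNIV \<times> sbox) (\<lambda>p. F (fst p + h) (snd p))"
  proof (rule continuous_on_compose2[OF assms[unfolded contF_def], where f="\<lambda>p. (fst p + h, snd p)", simplified])
    show "continuous_on (UNIV \<times> sbox) (\<lambda>p. (fst p + h, snd p))" by (intro continuous_intros)
  qed auto
  have c2: "continuous_on (UNIV \<times> sbox) (\<lambda>p. F (fst p) (snd p))"
    using assms unfolding contF_def by (simp add: case_prod_beta)
  show ?thesis unfolding contF_def Dl_def case_prod_beta by (intro continuous_intros c c2)
qed

lemma contF_Dls: "contF F \<Longrightarrow> contF (Dls hs F)"
  by (induction hs) (simp_all add: Dls_Cons contF_Dl)

lemma Sh_alt: "Sh h F s z = integral {0..h} (\<lambda>\<tau>. F (s + \<tau>) z)"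
  using integral_shift_Icc_real[of 0 h "\<lambda>\<sigma>. F \<sigma> z" s] by (simp add: Sh_def o_def add.commute)

lemma contF_Sh: assumes "contF F" shows "contF (Sh h F)"
proof -
  have c: "continuous_on ((UNIV \<times> sbox) \<times> cbox 0 h) (\<lambda>(x, \<tau>). F (fst x + \<tau>) (snd x))"
    unfolding case_prod_beta by (rule contF_comp[OF assms]) (auto intro!: continuous_intros)
  have "continuous_on (UNIV \<times> sbox) (\<lambda>x. integral (cbox 0 h) (\<lambda>\<tau>. F (fst x + \<tau>) (snd x)))"
    by (rule integral_continuous_on_param) (use c in \<open>simp add: case_prod_beta\<close>)
  then show ?thesis unfolding contF_def case_prod_beta Sh_alt by (simp add: cbox_interval)
qed

lemma deriv_Sh:
  assumes "contF F" "z \<in> sbox" "h \<ge> 0"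
  shows "((\<lambda>s. Sh h F s z) has_vector_derivative Dl h F s z) (at s)"
proof -
  define f where "f \<sigma> = F \<sigma> z" for \<sigma>
  have cf: "continuous_on UNIV f"
  proof -
    have "continuous_on UNIV (\<lambda>\<sigma>. F (fst (\<sigma>, z)) (snd (\<sigma>, z)))"
      by (rule continuous_on_compose2[OF assms(1)[unfolded contF_def], where f="\<lambda>\<sigma>. (\<sigma>, z)", simplified case_prod_beta])
        (use assms(2) in \<open>auto intro!: continuous_intros\<close>)
    then show ?thesis by (simp add: f_def)
  qed
  define a where "a = s - 1"
  define b where "b = s + h + 1"
  define \<Phi> where "\<Phi> u = integral {a..u} f" for u
  have dPhi: "(\<Phi> has_vector_derivative f u) (at u)" if "a < u" "u < b" for u
  proof -
    have "(\<Phi> has_vector_derivative f u) (at u within {a..b})"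
      unfolding \<Phi>_def using that by (intro integral_has_vector_derivative continuous_on_subset[OF cf]) auto
    then have "(\<Phi> has_vector_derivative f u) (at u within {a<..<b})"
      by (rule has_vector_derivative_within_subset) auto
    then show ?thesis using that by (subst (asm) has_vector_derivative_within_open) auto
  qed
  have d1: "((\<lambda>t. \<Phi> (t + h) - \<Phi> t) has_vector_derivative f (s + h) - f s) (at s)"
  proof -
    have "((\<lambda>t. t + h) has_vector_derivative 1) (at s)"
      by (auto intro!: derivative_eq_intros simp: has_real_derivative_iff_has_vector_derivative[symmetric])
    from vector_diff_chain_at[OF this dPhi[of "s + h"]]
    have "((\<lambda>t. \<Phi> (t + h)) has_vector_derivative f (s + h)) (at s)"
      using assms(3) by (simp add: o_def a_def b_def)
    moreover have "(\<Phi> has_vector_derivative f s) (at s)" using assms(3) by (intro dPhi) (auto simp: a_def b_def)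
    ultimately show ?thesis by (intro has_vector_derivative_diff)
  qed
  show ?thesis
  proof (rule has_vector_derivative_transform_within_open[OF _ _ _ ])
    show "((\<lambda>t. \<Phi> (t + h) - \<Phi> t) has_vector_derivative Dl h F s z) (at s)"
      using d1 by (simp add: Dl_def f_def)
    show "open {a<..}" by simp
    show "s \<in> {a<..}" by (simp add: a_def)
    fix t assume t: "t \<in> {a<..}"
    have "f integrable_on {a..t+h}"
      by (rule integrable_continuous_real, rule continuous_on_subset[OF cf]) auto
    then have "integral {a..t} f + integral {t..t+h} f = integral {a..t+h} f"
      using t assms(3) by (intro Henstock_Kurzweil_Integration.integral_combine) auto
    then show "\<Phi> (t + h) - \<Phi> t = Sh h F t z"
      unfolding \<Phi>_def Sh_def f_def by (simp add: algebra_simps)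
  qed
qed

lemma deriv_Dl:
  assumes "\<And>s. ((\<lambda>s. F s z) has_vector_derivative F' s z) (at s)"
  shows "((\<lambda>s. Dl h F s z) has_vector_derivative Dl h F' s z) (at s)"
proof -
  have "((\<lambda>t. t + h) has_vector_derivative 1) (at s)"
    by (auto intro!: derivative_eq_intros simp: has_real_derivative_iff_has_vector_derivative[symmetric])
  from vector_diff_chain_at[OF this assms[of "s + h"]]
  have "((\<lambda>t. F (t + h) z) has_vector_derivative F' (s + h) z) (at s)" by (simp add: o_def)
  then show ?thesis unfolding Dl_def by (intro has_vector_derivative_diff assms)
qed

lemma deriv_Dls:
  assumes "\<And>s. ((\<lambda>s. F s z) has_vector_derivative F' s z) (at s)"
  shows "((\<lambda>s. Dls hs F s z) has_vector_derivative Dls hs F' s z) (at s)"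
  using assms by (induction hs arbitrary: s) (simp_all add: Dls_Cons deriv_Dl)

lemma integral_swap_sbox:
  fixes f :: "real \<times> real \<Rightarrow> real \<Rightarrow> complex"
  assumes "continuous_on (sbox \<times> cbox 0 h) (\<lambda>(z, \<tau>). f z \<tau>)"
  shows "integral sbox (\<lambda>z. integral (cbox 0 h) (f z)) = integral (cbox 0 h) (\<lambda>\<tau>. integral sbox (\<lambda>z. f z \<tau>))"
proof -
  have "continuous_on (cbox ((0,0),0) ((pi,2*pi),h)) (\<lambda>(z, \<tau>). f z \<tau>)"
    using assms unfolding sbox_def by (simp add: cbox_Pair_eq)
  from integral_swap_continuous[OF this] show ?thesis unfolding sbox_def .
qed

lemma VQ_Sh:
  assumes "contF F" "VQ (\<lambda>_. 1) F"
  shows "VQ (\<lambda>_. 1) (Sh h F)"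
  unfolding VQ_def
proof
  fix x
  have c: "continuous_on (sbox \<times> cbox 0 h) (\<lambda>(z, \<tau>). complex_of_real (sin (fst z)) * F (ell x z + \<tau>) z)"
  proof -
    have "continuous_on (sbox \<times> cbox 0 h) (\<lambda>p. F (ell x (fst p) + snd p) (fst p))"
      by (rule contF_comp[OF assms(1)]) (auto intro!: continuous_intros)
    then show ?thesis unfolding case_prod_beta by (intro continuous_intros)
  qed
  have "Iz (\<lambda>z. 1 * Sh h F (ell x z) z) = integral sbox (\<lambda>z. integral (cbox 0 h) (\<lambda>\<tau>. complex_of_real (sin (fst z)) * F (ell x z + \<tau>) z))"
    unfolding Iz_def Sh_alt by (simp add: cbox_interval)
  also have "\<dots> = integral (cbox 0 h) (\<lambda>\<tau>. integral sbox (\<lambda>z. complex_of_real (sin (fst z)) * F (ell x z + \<tau>) z))"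
    by (rule integral_swap_sbox) (use c in simp)
  also have "\<dots> = integral (cbox 0 h) (\<lambda>\<tau>. 0)"
  proof (rule integral_cong)
    fix \<tau>
    have "Iz (\<lambda>z. 1 * F (ell (x + \<tau> *\<^sub>R e0) z) z) = 0" using assms(2) unfolding VQ_def by blast
    then show "integral sbox (\<lambda>z. complex_of_real (sin (fst z)) * F (ell x z + \<tau>) z) = 0"
      unfolding Iz_def ell_add ell_e0 by simp
  qed
  finally show "Iz (\<lambda>z. 1 * Sh h F (ell x z) z) = 0" by simp
qed

lemma continuous_prodf: "continuous_on S (\<lambda>z. complex_of_real (prodf vs z))"
proof (induction vs)
  case Nil then show ?case by (simp add: prodf_def)
next
  case (Cons v vs)
  then show ?case unfolding prodf_def by (simp add: ell_eq) (intro continuous_intros, simp add: prodf_def)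
qed

lemma claimC:
  assumes "length hs = length vs" "\<forall>h\<in>set hs. h \<ge> 0" "contF F" "VQ (\<lambda>_. 1) F"
  shows "VQ (\<lambda>z. complex_of_real (prodf vs z)) (Dls hs F)"
  using assms
proof (induction vs arbitrary: hs F)
  case Nil then show ?case by (simp add: prodf_def)
next
  case (Cons v vs)
  then obtain h hs' where hs: "hs = h # hs'" "length hs' = length vs" by (cases hs) auto
  have h0: "h \<ge> 0" "\<forall>h\<in>set hs'. h \<ge> 0" using Cons.prems(2) hs by auto
  have IH: "VQ (\<lambda>z. complex_of_real (prodf vs z)) (Dls hs' (Sh h F))"
    by (rule Cons.IH[OF hs(2) h0(2) contF_Sh[OF Cons.prems(3)] VQ_Sh[OF Cons.prems(3,4)]])
  have st: "Iz (\<lambda>z. complex_of_real (prodf vs z) * (of_real (ell v z) * Dls hs' (Dl h F) (ell x z) z)) = 0" for x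
  proof (rule step[where F="Dls hs' (Sh h F)"])
    show "continuous_on (UNIV \<times> sbox) (\<lambda>(s, z). Dls hs' (Sh h F) s z)"
      using contF_Dls[OF contF_Sh[OF Cons.prems(3)]] unfolding contF_def .
    show "continuous_on (UNIV \<times> sbox) (\<lambda>(s, z). Dls hs' (Dl h F) s z)"
      using contF_Dls[OF contF_Dl[OF Cons.prems(3)]] unfolding contF_def .
    show "((\<lambda>s. Dls hs' (Sh h F) s z) has_vector_derivative Dls hs' (Dl h F) s z) (at s)" if "z \<in> sbox" for s z
      by (rule deriv_Dls, rule deriv_Sh[OF Cons.prems(3) that h0(1)])
    show "continuous_on sbox (\<lambda>z. complex_of_real (prodf vs z))" by (rule continuous_prodf)
    show "Iz (\<lambda>z. complex_of_real (prodf vs z) * Dls hs' (Sh h F) (ell x z) z) = 0" for x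
      using IH unfolding VQ_def by blast
  qed
  show ?case unfolding VQ_def
  proof
    fix x
    show "Iz (\<lambda>z. complex_of_real (prodf (v # vs) z) * Dls hs F (ell x z) z) = 0"
      using st[of x] unfolding hs Dls_Cons Dls_Dl by (simp add: prodf_def mult_ac)
  qed
qed


definition D1 :: "real \<Rightarrow> (real \<Rightarrow> 'a::ab_group_add) \<Rightarrow> real \<Rightarrow> 'a" where
  "D1 h f = (\<lambda>s. f (s + h) - f s)"
definition D1s :: "real list \<Rightarrow> (real \<Rightarrow> 'a::ab_group_add) \<Rightarrow> real \<Rightarrow> 'a" where
  "D1s hs f = foldr D1 hs f"
definition lag :: "nat \<Rightarrow> nat \<Rightarrow> real poly" where
  "lag n i = smult (1 / (\<Prod>j\<in>{..<n}-{i}. (real i - real j))) (\<Prod>j\<in>{..<n}-{i}. [:- real j, 1:])"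
definition Interp :: "nat \<Rightarrow> (real \<Rightarrow> real) \<Rightarrow> bool" where
  "Interp n f \<longleftrightarrow> (\<forall>s. f s = (\<Sum>i<n. f (real i) * poly (lag n i) s))"

lemma D1s_Nil[simp]: "D1s [] f = f" by (simp add: D1s_def)
lemma D1s_Cons: "D1s (h # hs) f = D1 h (D1s hs f)" by (simp add: D1s_def)

lemma poly_lag: "i < n \<Longrightarrow> k < n \<Longrightarrow> poly (lag n i) (real k) = (if k = i then 1 else 0)"
proof -
  assume i: "i < n" and k: "k < n"
  show ?thesis
  proof (cases "k = i")
    case True
    have "(\<Prod>j\<in>{..<n}-{i}. (real i - real j)) \<noteq> 0" by (subst prod_zero_iff) auto
    then show ?thesis using True by (simp add: lag_def poly_prod)
  next
    case False
    have "(\<Prod>j\<in>{..<n}-{i}. poly [:- real j, 1:] (real k)) = 0"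
      using False k by (subst prod_zero_iff) auto
    then show ?thesis using False by (simp add: lag_def poly_prod)
  qed
qed

lemma degree_lag: "i < n \<Longrightarrow> degree (lag n i) < n"
proof -
  assume i: "i < n"
  then have n: "n > 0" by simp
  have "degree (lag n i) \<le> degree (\<Prod>j\<in>{..<n}-{i}. [:- real j, 1:])"
    unfolding lag_def by (rule degree_smult_le)
  also have "degree (\<Prod>j\<in>{..<n}-{i}. [:- real j, 1:]) \<le> (\<Sum>j\<in>{..<n}-{i}. degree [:- real j, 1:])"
    using degree_prod_sum_le[of "{..<n}-{i}" "\<lambda>j. [:- real j, 1:]"] by (simp add: o_def)
  also have "\<dots> = card ({..<n}-{i})" by simp
  also have "\<dots> \<le> n - 1" using i by (simp add: card_Diff_singleton)
  finally show ?thesis using n by linarith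
qed

lemma interp_poly:
  assumes "degree p < n"
  shows "poly p s = (\<Sum>i<n. poly p (real i) * poly (lag n i) s)"
proof -
  define q where "q = (\<Sum>i<n. smult (poly p (real i)) (lag n i))"
  have n: "n > 0" using assms by simp
  have dq: "degree q < n"
  proof -
    have dl: "degree (lag n i) \<le> n - 1" if "i < n" for i
      using degree_lag[OF that] by linarith
    have "degree q \<le> n - 1" unfolding q_def
    proof (rule degree_sum_le)
      fix i assume "i \<in> {..<n}"
      then show "degree (smult (poly p (real i)) (lag n i)) \<le> n - 1"
        by (intro order.trans[OF degree_smult_le dl]) simp
    qed simp
    then show ?thesis using n by linarith
  qed
  have agree: "poly p x = poly q x" if "x \<in> real ` {..<n}" for x
  proof -
    from that obtain k where k: "k < n" "x = real k" by auto
    have "poly q x = (\<Sum>i<n. poly p (real i) * (if k = i then 1 else 0))"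
      unfolding q_def poly_sum using k by (intro sum.cong) (auto simp: poly_lag)
    also have "\<dots> = (\<Sum>i<n. if i = k then poly p (real i) else 0)" by (intro sum.cong) auto
    also have "\<dots> = poly p (real k)" using k by (simp add: sum.delta')
    finally show ?thesis using k by simp
  qed
  have "card (real ` {..<n}) = n" by (subst card_image) (auto simp: inj_on_def)
  then have "p = q" using assms dq by (intro poly_eqI_degree[OF agree]) (assumption, simp_all)
  then have "poly p s = poly q s" by (rule arg_cong)
  also have "poly q s = (\<Sum>i<n. poly p (real i) * poly (lag n i) s)" unfolding q_def poly_sum by simp
  finally show ?thesis .
qed

lemma Interp_of_sum:
  assumes "\<And>x. g x = (\<Sum>m<n. c m * x ^ m)"
  shows "Interp n g"
proof (cases "n = 0")
  case True then show ?thesis using assms by (simp add: Interp_def)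
next
  case False
  define p where "p = (\<Sum>m<n. monom (c m) m)"
  have pg: "poly p x = g x" for x by (simp add: p_def poly_sum poly_monom assms)
  have dm: "degree (monom (c m) m) \<le> n - 1" if "m \<in> {..<n}" for m
    using degree_monom_le[of "c m" m] that by simp
  have "degree p \<le> n - 1" unfolding p_def
    by (rule degree_sum_le) (simp, rule dm)
  then have deg: "degree p < n" using False by linarith
  show ?thesis unfolding Interp_def
  proof
    fix s
    have "g s = poly p s" using pg by simp
    also have "\<dots> = (\<Sum>i<n. poly p (real i) * poly (lag n i) s)" by (rule interp_poly[OF deg])
    also have "\<dots> = (\<Sum>i<n. g (real i) * poly (lag n i) s)" using pg by simp
    finally show "g s = (\<Sum>i<n. g (real i) * poly (lag n i) s)" .
  qed
qed


definition Av :: "real \<Rightarrow> (real \<Rightarrow> real) \<Rightarrow> real \<Rightarrow> real" where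
  "Av k g = (\<lambda>s. integral {s..s+k} g / k)"

lemma deriv_int_shift:
  fixes f :: "real \<Rightarrow> 'a::banach"
  assumes cf: "continuous_on UNIV f" and h: "h \<ge> 0"
  shows "((\<lambda>t. integral {t..t+h} f) has_vector_derivative f (s + h) - f s) (at s)"
proof -
  define a where "a = s - 1"
  define b where "b = s + h + 1"
  define \<Phi> where "\<Phi> u = integral {a..u} f" for u
  have dPhi: "(\<Phi> has_vector_derivative f u) (at u)" if "a < u" "u < b" for u
  proof -
    have "(\<Phi> has_vector_derivative f u) (at u within {a..b})"
      unfolding \<Phi>_def using that by (intro integral_has_vector_derivative continuous_on_subset[OF cf]) auto
    then have "(\<Phi> has_vector_derivative f u) (at u within {a<..<b})"
      by (rule has_vector_derivative_within_subset) auto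
    then show ?thesis using that by (subst (asm) has_vector_derivative_within_open) auto
  qed
  have d1: "((\<lambda>t. \<Phi> (t + h) - \<Phi> t) has_vector_derivative f (s + h) - f s) (at s)"
  proof -
    have "((\<lambda>t. t + h) has_vector_derivative 1) (at s)"
      by (auto intro!: derivative_eq_intros simp: has_real_derivative_iff_has_vector_derivative[symmetric])
    from vector_diff_chain_at[OF this dPhi[of "s + h"]]
    have "((\<lambda>t. \<Phi> (t + h)) has_vector_derivative f (s + h)) (at s)"
      using h by (simp add: o_def a_def b_def)
    moreover have "(\<Phi> has_vector_derivative f s) (at s)" using h by (intro dPhi) (auto simp: a_def b_def)
    ultimately show ?thesis by (intro has_vector_derivative_diff)
  qed
  show ?thesis
  proof (rule has_vector_derivative_transform_within_open[OF d1])
    show "open {a<..}" by simp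
    show "s \<in> {a<..}" by (simp add: a_def)
    fix t assume t: "t \<in> {a<..}"
    have "f integrable_on {a..t+h}"
      by (rule integrable_continuous_real, rule continuous_on_subset[OF cf]) auto
    then have "integral {a..t} f + integral {t..t+h} f = integral {a..t+h} f"
      using t h by (intro Henstock_Kurzweil_Integration.integral_combine) auto
    then show "\<Phi> (t + h) - \<Phi> t = integral {t..t+h} f"
      unfolding \<Phi>_def by (simp add: algebra_simps)
  qed
qed

lemma deriv_Av:
  assumes "continuous_on UNIV g" "k > 0"
  shows "DERIV (Av k g) s :> D1 k g s / k"
proof -
  have "((\<lambda>t. integral {t..t+k} g) has_vector_derivative g (s + k) - g s) (at s)"
    using assms by (intro deriv_int_shift) auto
  then have "((\<lambda>t. integral {t..t+k} g) has_real_derivative g (s + k) - g s) (at s)"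
    by (simp add: has_real_derivative_iff_has_vector_derivative)
  then show ?thesis unfolding Av_def D1_def using assms(2) by (intro derivative_eq_intros) auto
qed

lemma cont_Av: "continuous_on UNIV g \<Longrightarrow> k > 0 \<Longrightarrow> continuous_on UNIV (Av k g)"
  by (rule DERIV_continuous_on, rule deriv_Av) auto

lemma cont_Av_pow: "continuous_on UNIV g \<Longrightarrow> k > 0 \<Longrightarrow> continuous_on UNIV ((Av k ^^ n) g)"
  by (induction n) (auto intro: cont_Av)

lemma D1_commute: "D1 h (D1 k f) = D1 k (D1 h f)"
  by (simp add: D1_def algebra_simps add_ac)

lemma D1s_D1: "D1 h (D1s hs f) = D1s hs (D1 h f)"
  by (induction hs) (simp_all add: D1s_Cons D1_commute)

lemma D1s_divide: "D1s hs (\<lambda>s. g s / c) = (\<lambda>s. D1s hs g s / (c::real))"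
  by (induction hs) (simp_all add: D1s_Cons D1_def diff_divide_distrib)

lemma deriv_D1s:
  assumes "\<And>x. DERIV g x :> g' x"
  shows "DERIV (D1s hs g) x :> D1s hs g' x"
  using assms
proof (induction hs arbitrary: x)
  case Nil then show ?case by simp
next
  case (Cons h hs)
  have d1: "DERIV (D1s hs g) (x + h) :> D1s hs g' (x + h)" by (rule Cons.IH[OF Cons.prems])
  have "DERIV (\<lambda>x. D1s hs g (x + h)) x :> D1s hs g' (x + h)"
    using d1 by (simp add: DERIV_shift)
  moreover have "DERIV (D1s hs g) x :> D1s hs g' x" by (rule Cons.IH[OF Cons.prems])
  ultimately show ?case unfolding D1s_Cons D1_def by (rule DERIV_diff)
qed

lemma Taylor_Av:
  assumes cf: "continuous_on UNIV f" and k: "k > 0"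
    and D0: "\<And>s. D1s (replicate J k) f s = 0"
  shows "Interp J ((Av k ^^ J) f)"
proof -
  define diff where "diff m = (if m \<le> J then (\<lambda>x. D1s (replicate m k) ((Av k ^^ (J - m)) f) x / k ^ m) else (\<lambda>x. 0))" for m
  have dJ: "diff J = (\<lambda>x. 0)" by (simp add: diff_def D0)
  have DER: "DERIV (diff m) x :> diff (Suc m) x" for m x
  proof (cases "m < J")
    case True
    define g where "g = (Av k ^^ (J - Suc m)) f"
    have cg: "continuous_on UNIV g" unfolding g_def by (rule cont_Av_pow[OF cf k])
    have e1: "(Av k ^^ (J - m)) f = Av k g"
      unfolding g_def using True by (metis Suc_diff_Suc comp_apply funpow.simps(2))
    have "DERIV (D1s (replicate m k) (Av k g)) x :> D1s (replicate m k) (\<lambda>s. D1 k g s / k) x"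
      by (rule deriv_D1s, rule deriv_Av[OF cg k])
    also have "D1s (replicate m k) (\<lambda>s. D1 k g s / k) x = D1s (replicate (Suc m) k) g x / k"
      by (simp add: D1s_divide D1s_Cons D1s_D1)
    finally have "DERIV (D1s (replicate m k) (Av k g)) x :> D1s (replicate (Suc m) k) g x / k" .
    then have "DERIV (\<lambda>x. D1s (replicate m k) (Av k g) x / k ^ m) x :> D1s (replicate (Suc m) k) g x / k / k ^ m"
      using k by (intro derivative_eq_intros) auto
    then show ?thesis using True unfolding diff_def e1 g_def by (simp add: field_simps)
  next
    case False
    then have "diff m = (\<lambda>x. 0)" "diff (Suc m) = (\<lambda>x. 0)"
      using dJ by (auto simp: diff_def)
    then show ?thesis by simp
  qed
  show ?thesis
  proof (rule Interp_of_sum)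
    fix x
    obtain t where "(Av k ^^ J) f x = (\<Sum>m<J. diff m 0 / fact m * x ^ m) + diff J t / fact J * x ^ J"
      using Maclaurin_all_le[of diff "(Av k ^^ J) f", OF _ allI[OF allI[OF DER]], of x J] by (auto simp: diff_def)
    then show "(Av k ^^ J) f x = (\<Sum>m<J. diff m 0 / fact m * x ^ m)" using dJ by simp
  qed
qed

lemma Av_limit_aux:
  assumes cf: "continuous_on UNIV f"
  shows "\<forall>e>0. \<exists>d>0. \<forall>k u. 0 < k \<longrightarrow> k < d \<longrightarrow> \<bar>u - s\<bar> < d \<longrightarrow> \<bar>(Av k ^^ J) f u - f s\<bar> \<le> e"
proof (induction J)
  case 0
  show ?case
  proof (intro allI impI)
    fix e :: real assume e: "e > 0"
    from cf have "isCont f s" by (simp add: continuous_on_eq_continuous_at)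
    then obtain d where d: "d > 0" "\<And>u. \<bar>u - s\<bar> < d \<Longrightarrow> \<bar>f u - f s\<bar> < e"
      using e unfolding continuous_at_eps_delta dist_real_def by blast
    then show "\<exists>d>0. \<forall>k u. 0 < k \<longrightarrow> k < d \<longrightarrow> \<bar>u - s\<bar> < d \<longrightarrow> \<bar>(Av k ^^ 0) f u - f s\<bar> \<le> e"
      by (intro exI[of _ d]) (auto intro: less_imp_le)
  qed
next
  case (Suc J)
  show ?case
  proof (intro allI impI)
    fix e :: real assume e: "e > 0"
    from Suc.IH e obtain d where d: "d > 0" "\<And>k u. 0 < k \<Longrightarrow> k < d \<Longrightarrow> \<bar>u - s\<bar> < d \<Longrightarrow> \<bar>(Av k ^^ J) f u - f s\<bar> \<le> e"
      by blast
    show "\<exists>d>0. \<forall>k u. 0 < k \<longrightarrow> k < d \<longrightarrow> \<bar>u - s\<bar> < d \<longrightarrow> \<bar>(Av k ^^ Suc J) f u - f s\<bar> \<le> e"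
    proof (intro exI[of _ "d/2"] conjI allI impI)
      show "d / 2 > 0" using d by simp
      fix k u assume k: "0 < k" "k < d / 2" and u: "\<bar>u - s\<bar> < d / 2"
      define g where "g = (Av k ^^ J) f"
      have cg: "continuous_on UNIV g" unfolding g_def by (rule cont_Av_pow[OF cf k(1)])
      have "integral {u..u+k} (\<lambda>\<sigma>. g \<sigma> - f s) = integral {u..u+k} g - k * f s"
        using k cg by (subst integral_diff) (auto intro: integrable_continuous_real continuous_on_subset)
      moreover have "norm (integral {u..u+k} (\<lambda>\<sigma>. g \<sigma> - f s)) \<le> e * ((u + k) - u)"
      proof (rule integral_bound)
        show "u \<le> u + k" using k by simp
        show "continuous_on {u..u + k} (\<lambda>\<sigma>. g \<sigma> - f s)"
          by (intro continuous_intros continuous_on_subset[OF cg]) auto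
        fix t assume t: "t \<in> {u..u+k}"
        have "u - s < d/2" "s - u < d/2" using u by arith+
        then have "\<bar>t - s\<bar> < d" using t k by (simp add: abs_less_iff)
        then show "norm (g t - f s) \<le> e" using d(2)[of k t] k unfolding g_def by simp
      qed
      ultimately have "\<bar>integral {u..u+k} g - k * f s\<bar> \<le> e * k" by simp
      then have "\<bar>integral {u..u+k} g / k - f s\<bar> \<le> e"
        using k by (simp add: field_simps abs_divide)
      then show "\<bar>(Av k ^^ Suc J) f u - f s\<bar> \<le> e"
        by (simp add: Av_def g_def)
    qed
  qed
qed

lemma Av_limit:
  assumes cf: "continuous_on UNIV f"
  shows "((\<lambda>k. (Av k ^^ J) f s) \<longlongrightarrow> f s) (at_right 0)"
proof (rule tendstoI)
  fix e :: real assume e: "e > 0"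
  from Av_limit_aux[OF cf, of s J] e obtain d where d: "d > 0"
    "\<And>k u. 0 < k \<Longrightarrow> k < d \<Longrightarrow> \<bar>u - s\<bar> < d \<Longrightarrow> \<bar>(Av k ^^ J) f u - f s\<bar> \<le> e/2"
    by (meson half_gt_zero)
  show "\<forall>\<^sub>F k in at_right 0. dist ((Av k ^^ J) f s) (f s) < e"
    unfolding eventually_at_right_field
  proof (intro exI[of _ d] conjI allI impI)
    show "0 < d" by (rule d(1))
  next
    fix y :: real assume y: "0 < y" "y < d"
    then have "\<bar>(Av y ^^ J) f s - f s\<bar> \<le> e/2" using d(1) d(2)[of y s] by simp
    then show "dist ((Av y ^^ J) f s) (f s) < e" using e by (simp add: dist_real_def)
  qed
qed

lemma Interp_f:
  assumes cf: "continuous_on UNIV f"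
    and D0: "\<And>h s. h > 0 \<Longrightarrow> D1s (replicate J h) f s = 0"
  shows "Interp J f"
  unfolding Interp_def
proof
  fix s
  have ev: "\<forall>\<^sub>F k in at_right 0. (Av k ^^ J) f s = (\<Sum>i<J. (Av k ^^ J) f (real i) * poly (lag J i) s)"
    unfolding eventually_at_right_field
    using Taylor_Av[OF cf _ D0] unfolding Interp_def by (intro exI[of _ 1]) auto
  have "((\<lambda>k. (\<Sum>i<J. (Av k ^^ J) f (real i) * poly (lag J i) s)) \<longlongrightarrow> (\<Sum>i<J. f (real i) * poly (lag J i) s)) (at_right 0)"
    by (intro tendsto_intros Av_limit[OF cf])
  then have "((\<lambda>k. (Av k ^^ J) f s) \<longlongrightarrow> (\<Sum>i<J. f (real i) * poly (lag J i) s)) (at_right 0)"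
    by (rule Lim_transform_eventually) (use ev in \<open>auto elim: eventually_mono\<close>)
  from tendsto_unique[OF _ Av_limit[OF cf] this] show "f s = (\<Sum>i<J. f (real i) * poly (lag J i) s)"
    by simp
qed


lemma degree_bound:
  fixes P :: "real poly"
  assumes bnd: "\<And>x. \<bar>poly P x\<bar> \<le> K * (1 + \<bar>x\<bar>) ^ m"
  shows "degree P \<le> m"
proof (rule ccontr)
  assume "\<not> degree P \<le> m"
  then have dm: "m < degree P" by simp
  define d where "d = degree P"
  define c where "c = coeff P d"
  have "P \<noteq> 0" using dm by auto
  then have c0: "c \<noteq> 0" by (simp add: c_def d_def)
  have K0: "K \<ge> 0" using bnd[of 0] by (smt (verit) abs_ge_zero mult_cancel_left1 power_one)
  define M where "M = (\<Sum>i<d. \<bar>coeff P i\<bar>)"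
  have M0: "M \<ge> 0" unfolding M_def by (intro sum_nonneg) auto
  have d1: "d = Suc (d - 1)" using dm d_def by simp
  have key: "\<bar>c\<bar> * x \<le> K * 2 ^ m + M" if x: "x \<ge> 1" for x
  proof -
    have px: "poly P x = (\<Sum>i<d. coeff P i * x ^ i) + c * x ^ d"
      unfolding poly_altdef c_def d_def by (simp add: lessThan_Suc_atMost[symmetric])
    have "\<bar>\<Sum>i<d. coeff P i * x ^ i\<bar> \<le> (\<Sum>i<d. \<bar>coeff P i\<bar> * x ^ (d - 1))"
    proof -
      have "\<bar>\<Sum>i<d. coeff P i * x ^ i\<bar> \<le> (\<Sum>i<d. \<bar>coeff P i * x ^ i\<bar>)" by (rule sum_abs)
      also have "\<dots> \<le> (\<Sum>i<d. \<bar>coeff P i\<bar> * x ^ (d - 1))"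
      proof (rule sum_mono)
        fix i assume "i \<in> {..<d}"
        then have "x ^ i \<le> x ^ (d - 1)" using x by (intro power_increasing) auto
        then show "\<bar>coeff P i * x ^ i\<bar> \<le> \<bar>coeff P i\<bar> * x ^ (d - 1)"
          using x by (simp add: abs_mult mult_left_mono)
      qed
      finally show ?thesis .
    qed
    also have "\<dots> = M * x ^ (d - 1)" by (simp add: M_def sum_distrib_right)
    finally have s1: "\<bar>\<Sum>i<d. coeff P i * x ^ i\<bar> \<le> M * x ^ (d - 1)" .
    have "(1 + \<bar>x\<bar>) ^ m \<le> (2 * x) ^ m" using x by (intro power_mono) auto
    also have "\<dots> = 2 ^ m * x ^ m" by (simp add: power_mult_distrib)
    also have "\<dots> \<le> 2 ^ m * x ^ (d - 1)" using x dm d_def by (intro mult_left_mono power_increasing) auto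
    finally have s2: "(1 + \<bar>x\<bar>) ^ m \<le> 2 ^ m * x ^ (d - 1)" .
    have "\<bar>c\<bar> * x ^ d \<le> \<bar>poly P x\<bar> + \<bar>\<Sum>i<d. coeff P i * x ^ i\<bar>"
      unfolding px by (simp add: abs_mult)
    also have "\<dots> \<le> K * (2 ^ m * x ^ (d - 1)) + M * x ^ (d - 1)"
    proof -
      have "K * (1 + \<bar>x\<bar>) ^ m \<le> K * (2 ^ m * x ^ (d - 1))" using s2 K0 by (rule mult_left_mono)
      then show ?thesis using bnd[of x] s1 by linarith
    qed
    finally have "\<bar>c\<bar> * x * x ^ (d - 1) \<le> (K * 2 ^ m + M) * x ^ (d - 1)"
      by (subst (asm) d1) (simp add: algebra_simps)
    moreover have "x ^ (d - 1) > 0" using x by simp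
    ultimately show ?thesis by simp
  qed
  define x where "x = (K * 2 ^ m + M) / \<bar>c\<bar> + 1"
  have "x \<ge> 1" using K0 M0 c0 by (simp add: x_def)
  from key[OF this] have "\<bar>c\<bar> * x \<le> K * 2 ^ m + M" .
  moreover have "\<bar>c\<bar> * x = K * 2 ^ m + M + \<bar>c\<bar>" using c0 by (simp add: x_def field_simps)
  ultimately show False using c0 by simp
qed

lemma Interp_growth:
  assumes I: "Interp J f" and bnd: "\<And>s. \<bar>f s\<bar> \<le> K * (1 + \<bar>s\<bar>) ^ m"
  shows "Interp (Suc m) f"
proof -
  define P where "P = (\<Sum>i<J. smult (f (real i)) (lag J i))"
  have pf: "poly P s = f s" for s
  proof -
    have "poly P s = (\<Sum>i<J. f (real i) * poly (lag J i) s)" by (simp add: P_def poly_sum)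
    also have "\<dots> = f s" using I unfolding Interp_def by (rule allE[of _ s]) (rule sym)
    finally show ?thesis .
  qed
  have "degree P \<le> m" by (rule degree_bound[of P K m]) (simp add: pf bnd)
  then have dP: "degree P < Suc m" by simp
  show ?thesis unfolding Interp_def
  proof
    fix s
    have "f s = poly P s" by (simp add: pf)
    also have "\<dots> = (\<Sum>i<Suc m. poly P (real i) * poly (lag (Suc m) i) s)" by (rule interp_poly[OF dP])
    also have "\<dots> = (\<Sum>i<Suc m. f (real i) * poly (lag (Suc m) i) s)" by (simp add: pf)
    finally show "f s = (\<Sum>i<Suc m. f (real i) * poly (lag (Suc m) i) s)" .
  qed
qed

lemma poly1D:
  assumes cf: "continuous_on UNIV f"
    and D0: "\<And>h s. h > 0 \<Longrightarrow> D1s (replicate J h) f s = 0"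
    and bnd: "\<And>s. \<bar>f s\<bar> \<le> K * (1 + \<bar>s\<bar>) ^ m"
  shows "Interp (Suc m) f"
  by (rule Interp_growth[OF Interp_f[OF cf D0] bnd])


inductive LP :: "(real^4 \<Rightarrow> real) \<Rightarrow> bool" where
  LP_one: "LP (\<lambda>l. 1)"
| LP_lin: "LP f \<Longrightarrow> LP (\<lambda>l. mdot v l * f l)"
| LP_add: "LP f \<Longrightarrow> LP g \<Longrightarrow> LP (\<lambda>l. f l + g l)"
| LP_scale: "LP f \<Longrightarrow> LP (\<lambda>l. c * f l)"

lemma LP_mult: "LP f \<Longrightarrow> LP g \<Longrightarrow> LP (\<lambda>l. f l * g l)"
proof (induction rule: LP.induct)
  case LP_one then show ?case by simp
next
  case (LP_lin f v)
  have "LP (\<lambda>l. mdot v l * (f l * g l))" using LP_lin by (intro LP.LP_lin) auto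
  then show ?case by (simp add: mult.assoc)
next
  case (LP_add f1 f2)
  have "LP (\<lambda>l. f1 l * g l + f2 l * g l)" using LP_add by (intro LP.LP_add) auto
  then show ?case by (simp add: distrib_right)
next
  case (LP_scale f c)
  have "LP (\<lambda>l. c * (f l * g l))" using LP_scale by (intro LP.LP_scale) auto
  then show ?case by (simp add: mult.assoc)
qed

lemma LP_const: "LP (\<lambda>l. c)"
  using LP_scale[OF LP_one, of c] by simp

lemma LP_comp: "LP (\<lambda>l. l $ b)"
proof -
  have e: "mdot (\<chi> j. if j = b then (if b = 1 then 1 else -1) else 0) l = l $ b" for l :: "real^4"
    using exhaust_4[of b] by (elim disjE) (simp_all add: mdot_def)
  show ?thesis using LP_lin[OF LP_one, of "\<chi> j. if j = b then (if b = 1 then 1 else -1) else 0"] by (simp add: e)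
qed

lemma LP_linear:
  assumes "bounded_linear f"
  shows "LP f"
proof -
  have "f l = l$1 * f (axis 1 1) + l$2 * f (axis 2 1) + l$3 * f (axis 3 1) + l$4 * f (axis 4 1)" for l :: "real^4"
  proof -
    have lin: "linear f" using assms by (rule bounded_linear.linear)
    have "f l = f (\<Sum>i\<in>UNIV. l$i *s axis i 1)" by (simp only: basis_expansion)
    also have "\<dots> = (\<Sum>i\<in>UNIV. f (l$i *s axis i 1))" by (rule linear_sum[OF lin])
    also have "\<dots> = (\<Sum>i\<in>UNIV. l$i * f (axis i 1))"
      by (rule sum.cong) (simp_all add: scalar_mult_eq_scaleR linear_scale[OF lin])
    finally show ?thesis by (simp add: sum_4)
  qed
  note fl = this
  have e: "f = (\<lambda>l. l$1 * f (axis 1 1) + l$2 * f (axis 2 1) + l$3 * f (axis 3 1) + l$4 * f (axis 4 1))"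
    by (rule ext, rule fl)
  have t: "LP (\<lambda>l. l$b * c)" for b c by (rule LP_mult[OF LP_comp LP_const])
  have L: "LP (\<lambda>l. l$1 * f (axis 1 1) + l$2 * f (axis 2 1) + l$3 * f (axis 3 1) + l$4 * f (axis 4 1))"
    by (rule LP_add[OF LP_add[OF LP_add[OF t t] t] t])
  show ?thesis by (subst e) (rule L)
qed

lemma rpf_LP: "real_polynomial_function f \<Longrightarrow> LP f"
  by (induction rule: real_polynomial_function.induct) (auto intro: LP_linear LP_const LP_add LP_mult)

lemma continuous_mdot: "continuous_on S (\<lambda>l::real^4. mdot v l)"
  unfolding mdot_def by (intro continuous_intros)

lemma LP_cont: "LP f \<Longrightarrow> continuous_on UNIV f"
  by (induction rule: LP.induct) (auto intro!: continuous_intros continuous_mdot)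

lemma mem_box_sbox: "z \<in> box (0,0) (pi, 2*pi) \<longleftrightarrow> 0 < fst z \<and> fst z < pi \<and> 0 < snd z \<and> snd z < 2*pi"
  by (cases z) (auto simp: mem_box Basis_prod_def inner_prod_def)

lemma density_zero:
  fixes hf :: "real^4 \<Rightarrow> complex"
  assumes ch: "continuous_on (Lz ` sbox) hf"
    and orth: "\<And>vs. Iz (\<lambda>z. of_real (prodf vs z) * hf (Lz z)) = 0"
    and z: "z \<in> sbox"
  shows "hf (Lz z) = 0"
proof -
  define u where "u z = hf (Lz z)" for z
  have cu: "continuous_on sbox u"
    unfolding u_def by (rule continuous_on_compose2[OF ch continuous_Lz]) auto
  have O: "Iz (\<lambda>z. of_real (g (Lz z)) * (of_real (prodf vs z) * u z)) = 0" if "LP g" for g vs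
    using that
  proof (induction arbitrary: vs rule: LP.induct)
    case LP_one then show ?case using orth by (simp add: u_def)
  next
    case (LP_lin f v)
    have "Iz (\<lambda>z. of_real (f (Lz z)) * (of_real (prodf (v # vs) z) * u z)) = 0" by (rule LP_lin.IH)
    then show ?case by (simp add: prodf_def ell_def mult_ac)
  next
    case (LP_add f g)
    have cf: "continuous_on UNIV f" "continuous_on UNIV g" using LP_add.hyps by (auto intro: LP_cont)
    have i: "(\<lambda>z. complex_of_real (sin (fst z)) * (of_real (k (Lz z)) * (of_real (prodf vs z) * u z))) integrable_on sbox"
      if "continuous_on UNIV k" for k
      by (rule integrable_sbox) (intro continuous_intros continuous_prodf cu continuous_on_compose2[OF that continuous_Lz]; simp)
    have "Iz (\<lambda>z. of_real (f (Lz z) + g (Lz z)) * (of_real (prodf vs z) * u z)) =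
      Iz (\<lambda>z. of_real (f (Lz z)) * (of_real (prodf vs z) * u z)) + Iz (\<lambda>z. of_real (g (Lz z)) * (of_real (prodf vs z) * u z))"
      unfolding Iz_def using integral_add[OF i[OF cf(1)] i[OF cf(2)]] by (simp add: algebra_simps)
    then show ?case using LP_add.IH by simp
  next
    case (LP_scale f c)
    have "Iz (\<lambda>z. of_real (c * f (Lz z)) * (of_real (prodf vs z) * u z)) =
       of_real c * Iz (\<lambda>z. of_real (f (Lz z)) * (of_real (prodf vs z) * u z))"
      unfolding Iz_def by (simp flip: integral_mult_right add: mult_ac)
    then show ?case using LP_scale.IH by simp
  qed
  have O2: "Iz (\<lambda>z. of_real (g (Lz z)) * u z) = 0" if "real_polynomial_function g" for g
    using O[OF rpf_LP[OF that], of "[]"] by (simp add: prodf_def)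
  have cmp: "compact (sbox :: (real \<times> real) set)" unfolding sbox_def by simp
  obtain MH where MH: "\<And>z. z \<in> sbox \<Longrightarrow> norm (u z) \<le> MH"
    using compact_imp_bounded[OF compact_continuous_image[OF cu cmp]] unfolding bounded_iff by auto
  define C where "C = Henstock_Kurzweil_Integration.content sbox"
  have cK: "compact (Lz ` sbox)" by (rule compact_continuous_image[OF continuous_Lz cmp])
  have uu: "Iz (\<lambda>z. cnj (u z) * u z) = 0"
  proof (rule ccontr)
    assume ne: "Iz (\<lambda>z. cnj (u z) * u z) \<noteq> 0"
    define A where "A = norm (Iz (\<lambda>z. cnj (u z) * u z))"
    have A0: "A > 0" using ne by (simp add: A_def)
    have MH0: "MH \<ge> 0" using order_trans[OF norm_ge_zero MH[OF z]] .
    define e where "e = A / (4 * (MH + 1) * (C + 1))"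
    have C0: "C \<ge> 0" unfolding C_def by simp
    have e0: "e > 0" unfolding e_def using A0 MH0 C0 by (intro divide_pos_pos) auto
    have cRe: "continuous_on (Lz ` sbox) (\<lambda>l. Re (hf l))" "continuous_on (Lz ` sbox) (\<lambda>l. Im (hf l))"
      using ch by (auto intro: continuous_intros)
    obtain g1 where g1: "real_polynomial_function g1" "\<And>l. l \<in> Lz ` sbox \<Longrightarrow> \<bar>Re (hf l) - g1 l\<bar> < e"
      using Stone_Weierstrass_real_polynomial_function[OF cK cRe(1) e0] by blast
    obtain g2 where g2: "real_polynomial_function g2" "\<And>l. l \<in> Lz ` sbox \<Longrightarrow> \<bar>Im (hf l) - g2 l\<bar> < e"
      using Stone_Weierstrass_real_polynomial_function[OF cK cRe(2) e0] by blast
    define w where "w z = cnj (u z) - (of_real (g1 (Lz z)) - \<i> * of_real (g2 (Lz z)))" for z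
    have cg: "continuous_on sbox (\<lambda>z. complex_of_real (g (Lz z)))" if "real_polynomial_function g" for g
      by (intro continuous_intros continuous_on_compose2[OF LP_cont[OF rpf_LP[OF that]] continuous_Lz]) simp
    have iu: "(\<lambda>z. complex_of_real (sin (fst z)) * (complex_of_real (g (Lz z)) * u z)) integrable_on sbox"
      if "real_polynomial_function g" for g
      by (rule integrable_sbox) (intro continuous_intros cg[OF that] cu)
    have iw: "(\<lambda>z. complex_of_real (sin (fst z)) * (w z * u z)) integrable_on sbox"
      unfolding w_def by (rule integrable_sbox) (intro continuous_intros cg g1(1) g2(1) cu)
    have "Iz (\<lambda>z. cnj (u z) * u z) = Iz (\<lambda>z. w z * u z) + (Iz (\<lambda>z. of_real (g1 (Lz z)) * u z) - \<i> * Iz (\<lambda>z. of_real (g2 (Lz z)) * u z))"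
    proof -
      have "Iz (\<lambda>z. cnj (u z) * u z) = integral sbox (\<lambda>z. complex_of_real (sin (fst z)) * (w z * u z) +
          (complex_of_real (sin (fst z)) * (complex_of_real (g1 (Lz z)) * u z) - \<i> * (complex_of_real (sin (fst z)) * (complex_of_real (g2 (Lz z)) * u z))))"
        unfolding Iz_def w_def by (rule integral_cong) (simp add: algebra_simps)
      also have "\<dots> = Iz (\<lambda>z. w z * u z) + (Iz (\<lambda>z. of_real (g1 (Lz z)) * u z) - \<i> * Iz (\<lambda>z. of_real (g2 (Lz z)) * u z))"
        unfolding Iz_def
        by (subst integral_add[OF iw], intro integrable_diff iu g1(1) integrable_on_mult_right iu g2(1))
           (subst integral_diff[OF iu[OF g1(1)] integrable_on_mult_right[OF iu[OF g2(1)]]], simp)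
      finally show ?thesis .
    qed
    then have "Iz (\<lambda>z. cnj (u z) * u z) = Iz (\<lambda>z. w z * u z)" using O2 g1(1) g2(1) by simp
    moreover have "norm (Iz (\<lambda>z. w z * u z)) \<le> (2 * e * MH) * C"
    proof -
      have "norm (integral (cbox (0,0) (pi, 2*pi)) (\<lambda>z. complex_of_real (sin (fst z)) * (w z * u z))) \<le> (2 * e * MH) * Henstock_Kurzweil_Integration.content (cbox (0,0) (pi, 2*pi))"
      proof (rule has_integral_bound)
        show "0 \<le> 2 * e * MH" using e0 MH0 by simp
        show "((\<lambda>z. complex_of_real (sin (fst z)) * (w z * u z)) has_integral integral (cbox (0,0) (pi, 2*pi)) (\<lambda>z. complex_of_real (sin (fst z)) * (w z * u z))) (cbox (0,0) (pi, 2*pi))"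
          using iw unfolding sbox_def by (simp add: has_integral_integral)
        fix z assume zz: "z \<in> cbox (0,0) (pi, 2*pi)"
        then have zs: "z \<in> sbox" by (simp add: sbox_def)
        have "norm (w z) \<le> \<bar>Re (hf (Lz z)) - g1 (Lz z)\<bar> + \<bar>Im (hf (Lz z)) - g2 (Lz z)\<bar>"
        proof -
          have "w z = complex_of_real (Re (hf (Lz z)) - g1 (Lz z)) - \<i> * complex_of_real (Im (hf (Lz z)) - g2 (Lz z))"
            unfolding w_def u_def by (simp add: complex_eq_iff)
          also have "norm \<dots> \<le> \<bar>Re (hf (Lz z)) - g1 (Lz z)\<bar> + \<bar>Im (hf (Lz z)) - g2 (Lz z)\<bar>"
            by (rule order.trans[OF norm_triangle_ineq4]) (simp add: norm_mult flip: of_real_diff)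
          finally show ?thesis .
        qed
        also have "\<dots> \<le> 2 * e" using g1(2)[of "Lz z"] g2(2)[of "Lz z"] zs by fastforce
        finally have nw: "norm (w z) \<le> 2 * e" .
        have "norm (complex_of_real (sin (fst z)) * (w z * u z)) = \<bar>sin (fst z)\<bar> * (norm (w z) * norm (u z))"
          by (simp add: norm_mult)
        also have "\<dots> \<le> 1 * (2 * e * MH)"
          by (intro mult_mono abs_sin_le_one mult_mono nw MH zs) (use e0 in auto)
        finally show "norm (complex_of_real (sin (fst z)) * (w z * u z)) \<le> 2 * e * MH" by simp
      qed
      then show ?thesis unfolding Iz_def C_def sbox_def .
    qed
    ultimately have "A \<le> 2 * e * MH * C" unfolding A_def by simp
    also have "\<dots> < A"
    proof -
      have "2 * e * MH * C = A * (2 * MH * C) / (4 * (MH + 1) * (C + 1))" unfolding e_def by simp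
      also have "\<dots> < A"
      proof -
        have "2 * MH * C \<le> 2 * (MH + 1) * (C + 1)" using MH0 C0 by (intro mult_mono) auto
        moreover have "2 * (MH + 1) * (C + 1) > 0" using MH0 C0 by (intro mult_pos_pos) auto
        ultimately have "2 * MH * C < 4 * (MH + 1) * (C + 1)" by linarith
        then have "A * (2 * MH * C) < A * (4 * (MH + 1) * (C + 1))" using A0 by simp
        then show ?thesis using MH0 C0 by (simp add: divide_less_eq)
      qed
      finally show ?thesis .
    qed
    finally show False by simp
  qed
  define v where "v z = sin (fst z) * (norm (u z))^2" for z
  have cv: "continuous_on (cbox (0,0) (pi, 2*pi)) v"
    unfolding v_def using cu unfolding sbox_def by (intro continuous_intros) auto
  have iv: "(\<lambda>z. complex_of_real (v z)) = (\<lambda>z. complex_of_real (sin (fst z)) * (cnj (u z) * u z))"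
  proof
    fix z
    have sq: "complex_of_real ((norm (u z))^2) = cnj (u z) * u z"
      by (subst complex_norm_square) (simp add: mult.commute)
    show "complex_of_real (v z) = complex_of_real (sin (fst z)) * (cnj (u z) * u z)"
      unfolding v_def of_real_mult sq ..
  qed
  have "integral sbox (\<lambda>z. complex_of_real (v z)) = 0" using uu unfolding Iz_def iv .
  moreover have "integral sbox (\<lambda>z. complex_of_real (v z)) = complex_of_real (integral sbox v)"
    using integral_linear[OF integrable_continuous[OF cv] bounded_linear_of_real] unfolding sbox_def o_def .
  ultimately have "integral sbox v = 0" by simp
  then have hv: "(v has_integral 0) (cbox (0,0) (pi, 2*pi))"
    using integrable_continuous[OF cv] unfolding sbox_def by (metis has_integral_integral)
  have vz: "v z = 0" if "z \<in> cbox (0,0) (pi, 2*pi)" for z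
  proof (rule has_integral_0_cbox_imp_0[OF cv _ hv _ that])
    fix x assume "x \<in> box (0,0) (pi, 2*pi)"
    then have "sin (fst x) \<ge> 0" unfolding mem_box_sbox by (intro sin_ge_zero) auto
    then show "0 \<le> v x" unfolding v_def by simp
  next
    show "box (0,0) (pi, 2*pi) \<noteq> {}" using mem_box_sbox[of "(1, 1)"] pi_gt3 by auto
  qed
  have ubox: "u x = 0" if "x \<in> box (0,0) (pi, 2*pi)" for x
  proof -
    have "sin (fst x) > 0" using that unfolding mem_box_sbox by (auto intro!: sin_gt_zero)
    moreover have "v x = 0" using vz[OF subsetD[OF box_subset_cbox that]] .
    ultimately show ?thesis unfolding v_def by simp
  qed
  have bne: "box (0,0) (pi, 2*pi) \<noteq> {}" using mem_box_sbox[of "(1, 1)"] pi_gt3 by auto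
  have "u z = 0"
    by (rule continuous_constant_on_closure[where S="box (0,0) (pi, 2*pi)"])
       (use cu ubox z bne in \<open>auto simp: sbox_def\<close>)
  then show ?thesis by (simp add: u_def)
qed


lemma cont_slice: "contF F \<Longrightarrow> continuous_on sbox (\<lambda>z. F s z)"
  by (rule contF_comp[where g="\<lambda>z. s" and k="\<lambda>z. z"]) (auto intro: continuous_intros)

lemma Iz_Dls:
  assumes cF: "contF F" and cQ: "continuous_on sbox Q"
  shows "Iz (\<lambda>z. Q z * Dls hs F s z) = D1s hs (\<lambda>s. Iz (\<lambda>z. Q z * F s z)) s"
proof (induction hs arbitrary: s)
  case Nil then show ?case by simp
next
  case (Cons h hs)
  have c: "continuous_on sbox (\<lambda>z. Dls hs F t z)" for t by (rule cont_slice[OF contF_Dls[OF cF]])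
  have i: "(\<lambda>z. complex_of_real (sin (fst z)) * (Q z * Dls hs F t z)) integrable_on sbox" for t
    by (rule integrable_sbox) (intro continuous_intros cQ c)
  have "Iz (\<lambda>z. Q z * Dls (h # hs) F s z) = Iz (\<lambda>z. Q z * Dls hs F (s + h) z) - Iz (\<lambda>z. Q z * Dls hs F s z)"
    unfolding Iz_def Dls_Cons Dl_def using integral_diff[OF i[of "s + h"] i[of s]] by (simp add: algebra_simps)
  then show ?case using Cons.IH by (simp add: D1s_Cons D1_def)
qed

lemma D1s_Re: "D1s hs (\<lambda>s. Re (f s)) s = Re (D1s hs f s)"
  by (induction hs arbitrary: s) (simp_all add: D1s_Cons D1_def)

lemma D1s_Im: "D1s hs (\<lambda>s. Im (f s)) s = Im (D1s hs f s)"
  by (induction hs arbitrary: s) (simp_all add: D1s_Cons D1_def)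

lemma ell_se0: "ell (s *\<^sub>R e0) z = s"
  by (simp add: ell_eq e0_def vector_def)

lemma fQ_interp:
  assumes cG: "contF G" and VG: "VQ (\<lambda>_. 1) G"
    and bnd: "\<And>s z. z \<in> sbox \<Longrightarrow> norm (G s z) \<le> K * (1 + \<bar>s\<bar>) ^ m"
  shows "Iz (\<lambda>z. of_real (prodf vs z) * G s z) =
    (\<Sum>i<Suc m. Iz (\<lambda>z. of_real (prodf vs z) * G (real i) z) * of_real (poly (lag (Suc m) i) s))"
proof -
  define f where "f s = Iz (\<lambda>z. of_real (prodf vs z) * G s z)" for s
  define J where "J = length vs"
  have D0: "D1s (replicate J h) f s = 0" if h: "h > 0" for h s
  proof -
    have "VQ (\<lambda>z. complex_of_real (prodf vs z)) (Dls (replicate J h) G)"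
      by (rule claimC) (use h cG VG in \<open>auto simp: J_def\<close>)
    then have "Iz (\<lambda>z. complex_of_real (prodf vs z) * Dls (replicate J h) G (ell (s *\<^sub>R e0) z) z) = 0"
      unfolding VQ_def by blast
    then show ?thesis unfolding ell_se0 f_def by (subst (asm) Iz_Dls[OF cG continuous_prodf])
  qed
  have cf: "continuous_on UNIV f"
  proof -
    have "continuous_on (UNIV \<times> cbox (0,0) (pi,2*pi)) (\<lambda>(s, z). complex_of_real (sin (fst z)) * (of_real (prodf vs z) * G s z))"
    proof -
      have "continuous_on (UNIV \<times> sbox) (\<lambda>p. G (fst p) (snd p))"
        by (rule contF_comp[OF cG]) (auto intro: continuous_intros)
      then show ?thesis unfolding case_prod_beta sbox_def[symmetric]
        by (intro continuous_intros continuous_on_compose2[OF continuous_prodf continuous_on_snd]) auto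
    qed
    from integral_continuous_on_param[OF this] show ?thesis unfolding f_def Iz_def sbox_def .
  qed
  have "bounded ((\<lambda>z. complex_of_real (prodf vs z)) ` sbox)"
    by (rule compact_imp_bounded[OF compact_continuous_image[OF continuous_prodf]]) (simp add: sbox_def)
  then obtain Pm where Pm': "\<forall>x\<in>(\<lambda>z. complex_of_real (prodf vs z)) ` sbox. norm x \<le> Pm"
    unfolding bounded_iff by blast
  have Pm: "norm (complex_of_real (prodf vs z)) \<le> Pm" if "z \<in> sbox" for z
    using Pm' that by blast
  have z00: "(0,0) \<in> sbox" by (simp add: sbox_def cbox_Pair_eq)
  have Pm0: "Pm \<ge> 0" using order_trans[OF norm_ge_zero Pm[OF z00]] .
  have K0: "K * (1 + \<bar>s\<bar>) ^ m \<ge> 0" for s using order_trans[OF norm_ge_zero bnd[OF z00]] .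
  define C where "C = Henstock_Kurzweil_Integration.content sbox"
  have nf: "norm (f s) \<le> (Pm * K * C) * (1 + \<bar>s\<bar>) ^ m" for s
  proof -
    have "norm (integral (cbox (0,0) (pi,2*pi)) (\<lambda>z. complex_of_real (sin (fst z)) * (of_real (prodf vs z) * G s z)))
       \<le> (Pm * (K * (1 + \<bar>s\<bar>) ^ m)) * Henstock_Kurzweil_Integration.content (cbox (0,0) (pi,2*pi))"
    proof (rule has_integral_bound)
      show "0 \<le> Pm * (K * (1 + \<bar>s\<bar>) ^ m)" using Pm0 K0 by simp
      have "(\<lambda>z. complex_of_real (sin (fst z)) * (of_real (prodf vs z) * G s z)) integrable_on sbox"
        by (rule integrable_sbox) (intro continuous_intros continuous_prodf cont_slice[OF cG])
      then show "((\<lambda>z. complex_of_real (sin (fst z)) * (of_real (prodf vs z) * G s z)) has_integral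
         integral (cbox (0,0) (pi,2*pi)) (\<lambda>z. complex_of_real (sin (fst z)) * (of_real (prodf vs z) * G s z))) (cbox (0,0) (pi,2*pi))"
        unfolding sbox_def by (simp add: has_integral_integral)
      fix z assume "z \<in> cbox (0,0) (pi,2*pi)"
      then have zs: "z \<in> sbox" by (simp add: sbox_def)
      have "norm (complex_of_real (sin (fst z)) * (of_real (prodf vs z) * G s z)) =
          \<bar>sin (fst z)\<bar> * (norm (complex_of_real (prodf vs z)) * norm (G s z))" by (simp add: norm_mult)
      also have "\<dots> \<le> 1 * (Pm * (K * (1 + \<bar>s\<bar>) ^ m))"
        by (intro mult_mono abs_sin_le_one Pm[OF zs] bnd[OF zs]) (use Pm0 in auto)
      finally show "norm (complex_of_real (sin (fst z)) * (of_real (prodf vs z) * G s z)) \<le> Pm * (K * (1 + \<bar>s\<bar>) ^ m)"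
        by simp
    qed
    then show ?thesis unfolding f_def Iz_def C_def sbox_def by (simp add: mult_ac)
  qed
  have IRe: "Interp (Suc m) (\<lambda>s. Re (f s))"
  proof (rule poly1D)
    show "continuous_on UNIV (\<lambda>s. Re (f s))" by (intro continuous_intros cf)
    show "D1s (replicate J h) (\<lambda>s. Re (f s)) s = 0" if "h > 0" for h s
      by (simp add: D1s_Re D0[OF that])
    show "\<bar>Re (f s)\<bar> \<le> (Pm * K * C) * (1 + \<bar>s\<bar>) ^ m" for s
      using order_trans[OF abs_Re_le_cmod nf] .
  qed
  have IIm: "Interp (Suc m) (\<lambda>s. Im (f s))"
  proof (rule poly1D)
    show "continuous_on UNIV (\<lambda>s. Im (f s))" by (intro continuous_intros cf)
    show "D1s (replicate J h) (\<lambda>s. Im (f s)) s = 0" if "h > 0" for h s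
      by (simp add: D1s_Im D0[OF that])
    show "\<bar>Im (f s)\<bar> \<le> (Pm * K * C) * (1 + \<bar>s\<bar>) ^ m" for s
      using order_trans[OF abs_Im_le_cmod nf] .
  qed
  have "f s = (\<Sum>i<Suc m. f (real i) * of_real (poly (lag (Suc m) i) s))"
  proof (rule complex_eqI)
    have r: "Re (f s) = (\<Sum>i<Suc m. Re (f (real i)) * poly (lag (Suc m) i) s)"
      using IRe unfolding Interp_def by (rule spec)
    show "Re (f s) = Re (\<Sum>i<Suc m. f (real i) * of_real (poly (lag (Suc m) i) s))"
      unfolding r by (simp add: Re_sum)
    have r2: "Im (f s) = (\<Sum>i<Suc m. Im (f (real i)) * poly (lag (Suc m) i) s)"
      using IIm unfolding Interp_def by (rule spec)
    show "Im (f s) = Im (\<Sum>i<Suc m. f (real i) * of_real (poly (lag (Suc m) i) s))"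
      unfolding r2 by (simp add: Im_sum)
  qed
  then show ?thesis unfolding f_def .
qed


lemma poly_in_s:
  fixes \<Sigma> :: "real \<Rightarrow> real^4 \<Rightarrow> complex"
  assumes cont: "continuous_on (UNIV \<times> future_null) (\<lambda>(s, l). \<Sigma> s l)"
    and V: "\<And>x. Iz (\<lambda>z. \<Sigma> (ell x z) (Lz z)) = 0"
    and bnd: "\<And>s z. z \<in> sbox \<Longrightarrow> norm (\<Sigma> s (Lz z)) \<le> K * (1 + \<bar>s\<bar>) ^ m"
    and z: "z \<in> sbox"
  shows "\<Sigma> s (Lz z) = (\<Sum>i<Suc m. \<Sigma> (real i) (Lz z) * of_real (poly (lag (Suc m) i) s))"
proof -
  define G where "G s z = \<Sigma> s (Lz z)" for s z
  have cS: "continuous_on S (\<lambda>p. \<Sigma> (a p) (b p))" if "continuous_on S a" "continuous_on S b" "\<And>p. p \<in> S \<Longrightarrow> b p \<in> future_null" for S a b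
  proof -
    have "continuous_on S (\<lambda>p. (\<lambda>(s, l). \<Sigma> s l) (a p, b p))"
      by (rule continuous_on_compose2[OF cont]) (use that in \<open>auto intro: continuous_on_Pair\<close>)
    then show ?thesis by simp
  qed
  have cG: "contF G" unfolding contF_def G_def case_prod_beta
    by (rule cS) (auto intro!: continuous_intros continuous_on_compose2[OF continuous_Lz] simp: Lz_null)
  have VG: "VQ (\<lambda>_. 1) G" unfolding VQ_def G_def using V by simp
  have bG: "norm (G s z) \<le> K * (1 + \<bar>s\<bar>) ^ m" if "z \<in> sbox" for s z using bnd[OF that] by (simp add: G_def)
  define c where "c i = complex_of_real (poly (lag (Suc m) i) s)" for i
  define hf where "hf l = \<Sigma> s l - (\<Sum>i<Suc m. \<Sigma> (real i) l * c i)" for l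
  have ch: "continuous_on (Lz ` sbox) hf"
  proof -
    have c1: "continuous_on (Lz ` sbox) (\<lambda>l. \<Sigma> t l)" for t
      by (rule cS) (auto intro: continuous_intros simp: Lz_null)
    show ?thesis unfolding hf_def by (intro continuous_intros c1)
  qed
  have orth: "Iz (\<lambda>z. of_real (prodf vs z) * hf (Lz z)) = 0" for vs
  proof -
    have i: "(\<lambda>z. complex_of_real (sin (fst z)) * (of_real (prodf vs z) * G t z)) integrable_on sbox" for t
      by (rule integrable_sbox) (intro continuous_intros continuous_prodf cont_slice[OF cG])
    have "Iz (\<lambda>z. of_real (prodf vs z) * hf (Lz z)) =
       integral sbox (\<lambda>z. complex_of_real (sin (fst z)) * (of_real (prodf vs z) * G s z) -
         (\<Sum>i<Suc m. complex_of_real (sin (fst z)) * (of_real (prodf vs z) * G (real i) z) * c i))"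
      unfolding Iz_def hf_def G_def by (rule integral_cong) (simp add: algebra_simps sum_distrib_left)
    also have "\<dots> = Iz (\<lambda>z. of_real (prodf vs z) * G s z) - (\<Sum>i<Suc m. Iz (\<lambda>z. of_real (prodf vs z) * G (real i) z) * c i)"
      unfolding Iz_def
      by (subst integral_diff[OF i], (intro integrable_sum integrable_on_mult_left i; simp),
          subst Henstock_Kurzweil_Integration.integral_sum, simp, (intro integrable_on_mult_left i), simp)
    also have "\<dots> = 0" using fQ_interp[OF cG VG bG, of vs s] by (simp add: c_def)
    finally show ?thesis .
  qed
  have "hf (Lz z) = 0" by (rule density_zero[OF ch orth z])
  then show ?thesis by (simp add: hf_def c_def)
qed

lemma poly_growth:
  fixes p :: "real poly"
  shows "\<bar>poly p x\<bar> \<le> (\<Sum>i\<le>degree p. \<bar>coeff p i\<bar>) * (1 + \<bar>x\<bar>) ^ degree p"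
proof -
  have "\<bar>poly p x\<bar> \<le> (\<Sum>i\<le>degree p. \<bar>coeff p i * x ^ i\<bar>)" unfolding poly_altdef by (rule sum_abs)
  also have "\<dots> \<le> (\<Sum>i\<le>degree p. \<bar>coeff p i\<bar> * (1 + \<bar>x\<bar>) ^ degree p)"
  proof (rule sum_mono)
    fix i assume "i \<in> {..degree p}"
    then have "\<bar>x\<bar> ^ i \<le> (1 + \<bar>x\<bar>) ^ degree p"
      by (intro order.trans[OF power_mono[of "\<bar>x\<bar>" "1 + \<bar>x\<bar>"] power_increasing]) auto
    then show "\<bar>coeff p i * x ^ i\<bar> \<le> \<bar>coeff p i\<bar> * (1 + \<bar>x\<bar>) ^ degree p"
      by (simp add: abs_mult power_abs mult_left_mono)
  qed
  also have "\<dots> = (\<Sum>i\<le>degree p. \<bar>coeff p i\<bar>) * (1 + \<bar>x\<bar>) ^ degree p" by (simp add: sum_distrib_right)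
  finally show ?thesis .
qed

lemma mdot_scale2: "mdot x (c *\<^sub>R l) = c * mdot x l"
  by (simp add: mdot_def algebra_simps)
lemma mdot_scale1: "mdot (c *\<^sub>R x) l = c * mdot x l"
  by (simp add: mdot_def algebra_simps)

lemma lambda_bounds:
  assumes t: "unit_future_timelike t" and l: "l \<in> future_null" "l $ 1 = 1"
  shows "mdot t l \<ge> 1 / (2 * t$1) \<and> mdot t l \<le> 2 * t$1"
proof -
  have t1: "t$1 > 0" and tt: "t$1^2 - t$2^2 - t$3^2 - t$4^2 = 1"
    using t unfolding unit_future_timelike_def mdot_def by (auto simp: power2_eq_square)
  have ll: "l$2^2 + l$3^2 + l$4^2 = 1"
    using l unfolding future_null_def mdot_def by (auto simp: power2_eq_square)
  define w where "w = t$2 * l$2 + t$3 * l$3 + t$4 * l$4"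
  have lam: "mdot t l = t$1 - w" unfolding mdot_def w_def using l(2) by simp
  have lag: "(t$2^2 + t$3^2 + t$4^2) * (l$2^2 + l$3^2 + l$4^2) - w^2 =
      (t$2 * l$3 - t$3 * l$2)^2 + (t$2 * l$4 - t$4 * l$2)^2 + (t$3 * l$4 - t$4 * l$3)^2"
    unfolding w_def by algebra
  have "w^2 \<le> t$1^2 - 1"
  proof -
    have "0 \<le> (t$2 * l$3 - t$3 * l$2)^2 + (t$2 * l$4 - t$4 * l$2)^2 + (t$3 * l$4 - t$4 * l$3)^2" by simp
    then have "(t$2^2 + t$3^2 + t$4^2) * (l$2^2 + l$3^2 + l$4^2) - w^2 \<ge> 0" using lag by linarith
    then show ?thesis using ll tt by simp
  qed
  then have prod: "(t$1 - w) * (t$1 + w) \<ge> 1" by (simp add: algebra_simps power2_eq_square)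
  have pos: "t$1 - w > 0"
  proof (rule ccontr)
    assume "\<not> t$1 - w > 0"
    then have "t$1 + w > 0" using t1 by linarith
    then have "(t$1 - w) * (t$1 + w) \<le> 0" using \<open>\<not> t$1 - w > 0\<close> by (simp add: mult_nonpos_nonneg)
    then show False using prod by simp
  qed
  have pos2: "t$1 + w > 0"
  proof (rule ccontr)
    assume "\<not> t$1 + w > 0"
    then have "(t$1 - w) * (t$1 + w) \<le> 0" using pos by (simp add: mult_nonneg_nonpos)
    then show False using prod by simp
  qed
  have "(t$1 - w) * (2 * t$1) \<ge> 1"
  proof -
    have "(t$1 - w) * (t$1 + w) \<le> (t$1 - w) * (2 * t$1)" using pos pos by (intro mult_left_mono) auto
    then show ?thesis using prod by simp
  qed
  then have "t$1 - w \<ge> 1 / (2 * t$1)" using t1 by (simp add: field_simps)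
  moreover have "t$1 - w \<le> 2 * t$1" using pos2 t1 by simp
  ultimately show ?thesis unfolding lam by simp
qed


lemma choose_step: "(k - j) * (k choose j) = (k choose Suc j) * Suc j"
proof (cases k)
  case 0 then show ?thesis by simp
next
  case (Suc n)
  have "(k - j) * (k choose j) = k * ((k - 1) choose j)" by (rule binomial_absorb_comp)
  also have "\<dots> = (Suc n choose Suc j) * Suc j" using Suc_times_binomial_eq[of n j] Suc by simp
  finally show ?thesis using Suc by simp
qed

lemma moments:
  fixes Gk :: "nat \<Rightarrow> real \<times> real \<Rightarrow> complex"
  assumes cGk: "\<And>k. continuous_on sbox (Gk k)"
    and V: "\<And>x. Iz (\<lambda>z. (\<Sum>k\<le>m. of_real ((ell x z) ^ k) * Gk k z)) = 0"
    and j: "length vs \<le> m"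
  shows "Iz (\<lambda>z. of_real (prodf vs z) * Gk (length vs) z) = 0"
proof -
  define F where "F j s z = (\<Sum>k\<le>m. of_real (real (fact j * (k choose j)) * s ^ (k - j)) * Gk k z)" for j s z
  have cF: "contF (F j)" for j
  proof -
    have "continuous_on (UNIV \<times> sbox) (\<lambda>p. Gk k (snd p))" for k
      by (rule continuous_on_compose2[OF cGk continuous_on_snd]) auto
    then show ?thesis unfolding contF_def F_def case_prod_beta by (intro continuous_intros)
  qed
  have dF: "((\<lambda>s. F j s z) has_vector_derivative F (Suc j) s z) (at s)" for j s z
  proof -
    have d: "((\<lambda>s. complex_of_real (real (fact j * (k choose j)) * s ^ (k - j))) has_vector_derivative
        complex_of_real (real (fact (Suc j) * (k choose Suc j)) * s ^ (k - Suc j))) (at s)" for k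
    proof -
      have D1: "((\<lambda>s. real (fact j * (k choose j)) * s ^ (k - j)) has_real_derivative
          real (fact j * (k choose j)) * (real (k - j) * s ^ (k - j - 1))) (at s)"
        by (auto intro!: derivative_eq_intros)
      have eqA: "real (fact j * (k choose j)) * (real (k - j) * s ^ (k - j - 1)) =
          real (fact (Suc j) * (k choose Suc j)) * s ^ (k - Suc j)"
      proof -
        have eq: "fact j * (k choose j) * (k - j) = fact (Suc j) * (k choose Suc j)"
          using choose_step[of k j] by (simp add: algebra_simps)
        have e2: "real (fact j * (k choose j)) * real (k - j) = real (fact (Suc j) * (k choose Suc j))"
          unfolding of_nat_mult[symmetric] eq ..
        have e3: "k - j - 1 = k - Suc j" by simp
        show ?thesis unfolding e3 mult.assoc[symmetric] e2 ..
      qed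
      have "((\<lambda>s. real (fact j * (k choose j)) * s ^ (k - j)) has_real_derivative
          real (fact (Suc j) * (k choose Suc j)) * s ^ (k - Suc j)) (at s)" by (rule DERIV_cong[OF D1 eqA])
      then have "((\<lambda>s. real (fact j * (k choose j)) * s ^ (k - j)) has_vector_derivative
          real (fact (Suc j) * (k choose Suc j)) * s ^ (k - Suc j)) (at s)"
        by (simp add: has_real_derivative_iff_has_vector_derivative)
      from bounded_linear.has_vector_derivative[OF bounded_linear_of_real this] show ?thesis .
    qed
    show ?thesis unfolding F_def
      by (intro has_vector_derivative_sum has_vector_derivative_mult_left d)
  qed
  have VF: "VQ (\<lambda>z. complex_of_real (prodf vs z)) (F (length vs))" for vs
  proof (induction vs)
    case Nil
    show ?case unfolding VQ_def
    proof
      fix x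
      have "Iz (\<lambda>z. complex_of_real (prodf [] z) * F (length []) (ell x z) z) = Iz (\<lambda>z. (\<Sum>k\<le>m. of_real ((ell x z) ^ k) * Gk k z))"
        unfolding Iz_def by (rule integral_cong) (simp add: F_def prodf_def)
      then show "Iz (\<lambda>z. complex_of_real (prodf [] z) * F (length []) (ell x z) z) = 0" using V by simp
    qed
  next
    case (Cons v vs)
    have st: "Iz (\<lambda>z. complex_of_real (prodf vs z) * (of_real (ell v z) * F (Suc (length vs)) (ell x z) z)) = 0" for x
    proof (rule step[where F="F (length vs)"])
      show "continuous_on (UNIV \<times> sbox) (\<lambda>(s, z). F (length vs) s z)" using cF unfolding contF_def .
      show "continuous_on (UNIV \<times> sbox) (\<lambda>(s, z). F (Suc (length vs)) s z)" using cF unfolding contF_def .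
      show "((\<lambda>s. F (length vs) s z) has_vector_derivative F (Suc (length vs)) s z) (at s)" for s z by (rule dF)
      show "continuous_on sbox (\<lambda>z. complex_of_real (prodf vs z))" by (rule continuous_prodf)
      show "Iz (\<lambda>z. complex_of_real (prodf vs z) * F (length vs) (ell x z) z) = 0" for x
        using Cons.IH unfolding VQ_def by blast
    qed
    show ?case unfolding VQ_def
    proof
      fix x
      show "Iz (\<lambda>z. complex_of_real (prodf (v # vs) z) * F (length (v # vs)) (ell x z) z) = 0"
        using st[of x] by (simp add: prodf_def mult_ac)
    qed
  qed
  define J where "J = length vs"
  have F0: "F J 0 z = of_real (fact J) * Gk J z" for z
  proof -
    have "F J 0 z = (\<Sum>k\<le>m. if k = J then of_real (fact J) * Gk J z else 0)"
      unfolding F_def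
    proof (rule sum.cong)
      fix k assume "k \<in> {..m}"
      show "complex_of_real (real (fact J * (k choose J)) * 0 ^ (k - J)) * Gk k z = (if k = J then of_real (fact J) * Gk J z else 0)"
      proof (cases "k < J")
        case True then show ?thesis by simp
      next
        case False
        then show ?thesis by (cases "k = J") auto
      qed
    qed simp
    also have "\<dots> = of_real (fact J) * Gk J z" using j by (simp add: J_def)
    finally show ?thesis .
  qed
  have e0: "ell 0 z = 0" for z by (simp add: ell_eq)
  have "Iz (\<lambda>z. complex_of_real (prodf vs z) * F J (ell 0 z) z) = 0" using VF[of vs] unfolding VQ_def J_def by blast
  then have "integral sbox (\<lambda>z. complex_of_real (sin (fst z)) * (complex_of_real (prodf vs z) * (of_real (fact J) * Gk J z))) = 0"
    unfolding e0 F0 Iz_def .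
  moreover have "integral sbox (\<lambda>z. complex_of_real (sin (fst z)) * (complex_of_real (prodf vs z) * (of_real (fact J) * Gk J z)))
     = of_real (fact J) * Iz (\<lambda>z. complex_of_real (prodf vs z) * Gk J z)"
  proof -
    have "integral sbox (\<lambda>z. complex_of_real (sin (fst z)) * (complex_of_real (prodf vs z) * (of_real (fact J) * Gk J z)))
      = integral sbox (\<lambda>z. of_real (fact J) * (complex_of_real (sin (fst z)) * (complex_of_real (prodf vs z) * Gk J z)))"
      by (rule integral_cong) (simp only: mult.left_commute)
    also have "\<dots> = of_real (fact J) * Iz (\<lambda>z. complex_of_real (prodf vs z) * Gk J z)"
      unfolding Iz_def by (rule integral_mult_right)
    finally show ?thesis .
  qed
  ultimately have "of_real (fact J) * Iz (\<lambda>z. complex_of_real (prodf vs z) * Gk J z) = 0" by simp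
  then show ?thesis by (simp add: J_def)
qed


lemma Lz_surj:
  assumes l: "l \<in> future_null" "l $ 1 = 1"
  shows "\<exists>z\<in>sbox. Lz z = l"
proof -
  have ll: "(l$2)^2 + (l$3)^2 + (l$4)^2 = 1"
    using l unfolding future_null_def mdot_def by (auto simp: power2_eq_square)
  have l4: "\<bar>l$4\<bar> \<le> 1"
  proof -
    have "(l$4)^2 \<le> 1" using ll zero_le_power2[of "l$2"] zero_le_power2[of "l$3"] by linarith
    then show ?thesis using abs_square_le_1 by blast
  qed
  define \<theta> where "\<theta> = arccos (l$4)"
  have th: "0 \<le> \<theta>" "\<theta> \<le> pi" "cos \<theta> = l$4" using l4 by (auto simp: \<theta>_def arccos_lbound arccos_ubound cos_arccos)
  have sth: "sin \<theta> = sqrt (1 - (l$4)^2)" using l4 by (simp add: \<theta>_def sin_arccos)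
  define r where "r = sin \<theta>"
  have r0: "r \<ge> 0" using l4 by (simp add: r_def sth abs_square_le_1)
  have r2: "r^2 = (l$2)^2 + (l$3)^2" using ll l4 by (simp add: r_def sth abs_square_le_1)
  obtain \<phi> where ph: "0 \<le> \<phi>" "\<phi> \<le> 2*pi" "r * cos \<phi> = l$2" "r * sin \<phi> = l$3"
  proof (cases "r = 0")
    case True
    then have "l$2 = 0" "l$3 = 0" using r2 by (auto simp: sum_power2_eq_zero_iff)
    then show ?thesis using that[of 0] True by simp
  next
    case False
    have "(l$2 / r)^2 + (l$3 / r)^2 = ((l$2)^2 + (l$3)^2) / r^2" by (simp add: power_divide add_divide_distrib)
    also have "\<dots> = r^2 / r^2" by (simp only: r2)
    also have "\<dots> = 1" using False by simp
    finally have "(l$2 / r)^2 + (l$3 / r)^2 = 1" .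
    from sincos_total_2pi_le[OF this] obtain t where "0 \<le> t" "t \<le> 2 * pi" "l$2 / r = cos t" "l$3 / r = sin t" by blast
    then show ?thesis using that[of t] False by (simp add: field_simps)
  qed
  have "(\<theta>, \<phi>) \<in> sbox" using th ph unfolding sbox_def by (simp add: cbox_Pair_eq)
  moreover have "Lz (\<theta>, \<phi>) = l"
    unfolding vec_eq_iff forall_4 Lz_def using th ph l(2) by (simp add: sph_comp r_def[symmetric] mult.commute)
  ultimately show ?thesis by blast
qed

lemma mdot_axis: "mdot (axis b 1) l = lower l b"
  using exhaust_4[of b] by (elim disjE) (simp_all add: mdot_def axis_def lower_def)

lemma prod_list_upt: "prod_list (map f [0..<k]) = (\<Prod>i<k. f i)"
  by (induction k) (simp_all add: mult.commute)

lemma poly_sum_deg: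
  fixes p :: "real poly"
  assumes "degree p \<le> m"
  shows "poly p s = (\<Sum>k\<le>m. coeff p k * s ^ k)"
proof -
  have "poly p s = (\<Sum>k\<le>degree p. coeff p k * s ^ k)" by (rule poly_altdef)
  also have "\<dots> = (\<Sum>k\<le>m. coeff p k * s ^ k)"
    by (rule sum.mono_neutral_left) (use assms in \<open>auto simp: coeff_eq_0\<close>)
  finally show ?thesis .
qed


theorem lemma2p3:
  fixes \<Sigma> :: "real \<Rightarrow> real^4 \<Rightarrow> complex"
  assumes cont: "continuous_on (UNIV \<times> future_null) (\<lambda>(s, l). \<Sigma> s l)"
    and homog: "\<And>c s l. c > 0 \<Longrightarrow> l \<in> future_null \<Longrightarrow>
                  \<Sigma> (c * s) (c *\<^sub>R l) = complex_of_real (c powr -2) * \<Sigma> s l"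
    and bound: "\<exists>t p. unit_future_timelike t \<and>
                  (\<forall>s l. l \<in> future_null \<longrightarrow> mdot t l = 1 \<longrightarrow> norm (\<Sigma> s l) \<le> poly p s)"
    and vanish: "\<And>x. null_int (\<lambda>l. \<Sigma> (mdot x l) l) = 0"
  shows "\<exists>N::nat. \<exists>\<Sigma>k :: nat \<Rightarrow> real^4 \<Rightarrow> complex.
           (\<forall>s l. l \<in> future_null \<longrightarrow> \<Sigma> s l = (\<Sum>k\<le>N. complex_of_real (s ^ k) * \<Sigma>k k l)) \<and>
           (\<forall>k\<le>N. \<forall>a :: nat \<Rightarrow> 4.
              null_int (\<lambda>l. complex_of_real (\<Prod>i<k. lower l (a i)) * \<Sigma>k k l) = 0)"
proof -
  from bound obtain t p where t: "unit_future_timelike t"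
    and bp: "\<And>s l. l \<in> future_null \<Longrightarrow> mdot t l = 1 \<Longrightarrow> norm (\<Sigma> s l) \<le> poly p s" by blast
  define T where "T = t$1"
  have T0: "T > 0" using t by (simp add: unit_future_timelike_def T_def)
  define Cp where "Cp = (\<Sum>i\<le>degree p. \<bar>coeff p i\<bar>)"
  define m where "m = degree p"
  define K where "K = (2*T)^2 * Cp * (1 + 2*T)^m"
  have Cp0: "Cp \<ge> 0" by (simp add: Cp_def sum_nonneg)
  have cS: "continuous_on S (\<lambda>p. \<Sigma> (a p) (b p))" if "continuous_on S a" "continuous_on S b" "\<And>p. p \<in> S \<Longrightarrow> b p \<in> future_null" for S a b
  proof -
    have "continuous_on S (\<lambda>p. (\<lambda>(s, l). \<Sigma> s l) (a p, b p))"
      by (rule continuous_on_compose2[OF cont]) (use that in \<open>auto intro: continuous_on_Pair\<close>)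
    then show ?thesis by simp
  qed
  have bnd: "norm (\<Sigma> s (Lz z)) \<le> K * (1 + \<bar>s\<bar>) ^ m" for s z
  proof -
    define l where "l = Lz z"
    define lam where "lam = mdot t l"
    have lb: "lam \<ge> 1 / (2 * T)" "lam \<le> 2 * T"
      using lambda_bounds[OF t Lz_null Lz_1] by (simp_all add: lam_def l_def T_def)
    have lam0: "lam > 0" using lb(1) T0 by (smt (verit) divide_pos_pos)
    have ilam: "1 / lam \<le> 2 * T" using lb(1) lam0 T0 by (simp add: field_simps)
    define l' where "l' = (1 / lam) *\<^sub>R l"
    have l'n: "l' \<in> future_null"
      using Lz_null[of z] lam0 unfolding future_null_def l'_def l_def
      by (simp add: mdot_scale1 mdot_scale2 Lz_1)
    have l't: "mdot t l' = 1" using lam0 by (simp add: l'_def mdot_scale2 lam_def[symmetric])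
    have "\<Sigma> (lam * (s / lam)) (lam *\<^sub>R l') = complex_of_real (lam powr -2) * \<Sigma> (s / lam) l'"
      by (rule homog[OF lam0 l'n])
    moreover have "lam * (s / lam) = s" "lam *\<^sub>R l' = l" using lam0 by (simp_all add: l'_def)
    ultimately have e: "\<Sigma> s l = complex_of_real (lam powr -2) * \<Sigma> (s / lam) l'" by simp
    have p1: "lam powr -2 = (1 / lam)^2" using lam0 by (simp add: powr_minus powr_realpow power_one_over inverse_eq_divide)
    have p2: "(1 / lam)^2 \<le> (2 * T)^2" using ilam lam0 by (intro power_mono) auto
    have a1: "1 + \<bar>s / lam\<bar> \<le> (1 + 2 * T) * (1 + \<bar>s\<bar>)"
    proof -
      have "\<bar>s / lam\<bar> = \<bar>s\<bar> * (1 / lam)" using lam0 by (simp add: abs_divide)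
      also have "\<dots> \<le> \<bar>s\<bar> * (2 * T)" by (intro mult_left_mono ilam) auto
      finally show ?thesis using T0 by (simp add: algebra_simps)
    qed
    have a2: "(1 + \<bar>s / lam\<bar>) ^ m \<le> (1 + 2 * T) ^ m * (1 + \<bar>s\<bar>) ^ m"
      unfolding power_mult_distrib[symmetric] by (intro power_mono a1) auto
    have "norm (\<Sigma> s l) = lam powr -2 * norm (\<Sigma> (s / lam) l')" unfolding e by (simp add: norm_mult)
    also have "\<dots> \<le> lam powr -2 * poly p (s / lam)" using bp[OF l'n l't] by (intro mult_left_mono) auto
    also have "\<dots> \<le> lam powr -2 * (Cp * (1 + \<bar>s / lam\<bar>) ^ m)"
      using poly_growth[of p "s / lam"] unfolding Cp_def m_def by (intro mult_left_mono) auto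
    also have "\<dots> \<le> (2 * T)^2 * (Cp * ((1 + 2 * T) ^ m * (1 + \<bar>s\<bar>) ^ m))"
      unfolding p1 using p2 a2 Cp0 by (intro mult_mono) (auto intro: mult_left_mono)
    also have "\<dots> = K * (1 + \<bar>s\<bar>) ^ m" by (simp add: K_def)
    finally show ?thesis by (simp add: l_def)
  qed
  have V: "Iz (\<lambda>z. \<Sigma> (ell x z) (Lz z)) = 0" for x
  proof -
    have "continuous_on sbox (\<lambda>z. \<Sigma> (mdot x (Lz z)) (Lz z))"
      unfolding ell_def[symmetric] by (rule cS) (auto intro: continuous_intros continuous_Lz simp: Lz_null)
    from null_int_Iz[OF this] vanish[of x] show ?thesis by (simp add: ell_def)
  qed
  have slice: "\<Sigma> s l = (\<Sum>i<Suc m. \<Sigma> (real i) l * of_real (poly (lag (Suc m) i) s))"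
    if l: "l \<in> future_null" "l $ 1 = 1" for s l
  proof -
    obtain z where z: "z \<in> sbox" "Lz z = l" using Lz_surj[OF l] by blast
    show ?thesis using poly_in_s[OF cont V bnd z(1), of s] z(2) by simp
  qed
  define Gh where "Gh k l = (\<Sum>i<Suc m. \<Sigma> (real i) l * of_real (coeff (lag (Suc m) i) k))" for k l
  have slice3: "\<Sigma> s l = (\<Sum>k\<le>m. of_real (s ^ k) * Gh k l)"
    if l: "l \<in> future_null" "l $ 1 = 1" for s l
  proof -
    have dl: "degree (lag (Suc m) i) \<le> m" if "i < Suc m" for i using degree_lag[OF that] by simp
    have "\<Sigma> s l = (\<Sum>i<Suc m. \<Sigma> (real i) l * of_real (\<Sum>k\<le>m. coeff (lag (Suc m) i) k * s ^ k))"
      unfolding slice[OF l, of s] by (intro sum.cong refl) (simp add: poly_sum_deg[OF dl])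
    also have "\<dots> = (\<Sum>i<Suc m. \<Sum>k\<le>m. of_real (s ^ k) * (\<Sigma> (real i) l * of_real (coeff (lag (Suc m) i) k)))"
      by (simp add: sum_distrib_left mult_ac)
    also have "\<dots> = (\<Sum>k\<le>m. of_real (s ^ k) * Gh k l)"
      unfolding Gh_def by (subst sum.swap) (simp only: sum_distrib_left)
    finally show ?thesis .
  qed
  define \<Sigma>k where "\<Sigma>k k l = complex_of_real ((l$1) powr (-2 - real k)) * Gh k ((1 / l$1) *\<^sub>R l)" for k l
  have Sk1: "\<Sigma>k k (Lz z) = Gh k (Lz z)" for k z by (simp add: \<Sigma>k_def Lz_1)
  show ?thesis
  proof (intro exI[of _ m] exI[of _ \<Sigma>k] conjI allI impI)
    fix s l assume l: "l \<in> future_null"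
    define c where "c = l$1"
    have c0: "c > 0" using l by (simp add: future_null_def c_def)
    define lh where "lh = (1 / c) *\<^sub>R l"
    have lh: "lh \<in> future_null" "lh $ 1 = 1"
      using l c0 unfolding future_null_def lh_def c_def by (simp_all add: mdot_scale1 mdot_scale2)
    have "\<Sigma> (c * (s / c)) (c *\<^sub>R lh) = complex_of_real (c powr -2) * \<Sigma> (s / c) lh"
      by (rule homog[OF c0 lh(1)])
    moreover have "c * (s / c) = s" "c *\<^sub>R lh = l" using c0 by (simp_all add: lh_def)
    ultimately have "\<Sigma> s l = complex_of_real (c powr -2) * \<Sigma> (s / c) lh" by simp
    also have "\<dots> = complex_of_real (c powr -2) * (\<Sum>k\<le>m. of_real ((s / c) ^ k) * Gh k lh)"
      by (simp add: slice3[OF lh])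
    also have "\<dots> = (\<Sum>k\<le>m. complex_of_real (s ^ k) * \<Sigma>k k l)"
      unfolding sum_distrib_left
    proof (rule sum.cong[OF refl])
      fix k
      have "c powr -2 * (s / c) ^ k = s ^ k * c powr (-2 - real k)"
        using c0 by (simp add: powr_diff powr_realpow power_divide)
      then have "complex_of_real (c powr -2) * complex_of_real ((s / c) ^ k) = complex_of_real (s ^ k) * complex_of_real (c powr (-2 - real k))"
        by (simp only: of_real_mult[symmetric])
      then show "complex_of_real (c powr -2) * (complex_of_real ((s / c) ^ k) * Gh k lh) = complex_of_real (s ^ k) * \<Sigma>k k l"
        unfolding \<Sigma>k_def lh_def c_def[symmetric] by (simp add: mult.assoc[symmetric])
    qed
    finally show "\<Sigma> s l = (\<Sum>k\<le>m. complex_of_real (s ^ k) * \<Sigma>k k l)" .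
  next
    fix k :: nat and a :: "nat \<Rightarrow> 4" assume k: "k \<le> m"
    define Gk where "Gk k z = Gh k (Lz z)" for k z
    have cGk: "continuous_on sbox (Gk k)" for k
    proof -
      have "continuous_on sbox (\<lambda>z. \<Sigma> (real i) (Lz z))" for i
        by (rule cS) (auto intro: continuous_intros continuous_Lz simp: Lz_null)
      then show ?thesis unfolding Gk_def Gh_def by (intro continuous_intros)
    qed
    have VG: "Iz (\<lambda>z. (\<Sum>k\<le>m. of_real ((ell x z) ^ k) * Gk k z)) = 0" for x
    proof -
      have "Iz (\<lambda>z. (\<Sum>k\<le>m. of_real ((ell x z) ^ k) * Gk k z)) = Iz (\<lambda>z. \<Sigma> (ell x z) (Lz z))"
        unfolding Iz_def Gk_def by (rule integral_cong) (subst slice3[OF Lz_null Lz_1], rule refl)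
      then show ?thesis using V by simp
    qed
    define vs where "vs = map (\<lambda>i. axis (a i) (1::real)) [0..<k]"
    have lv: "length vs \<le> m" using k by (simp add: vs_def)
    have pv: "prodf vs z = (\<Prod>i<k. lower (Lz z) (a i))" for z
      unfolding prodf_def vs_def by (simp add: o_def ell_def mdot_axis prod_list_upt)
    have M: "Iz (\<lambda>z. of_real (prodf vs z) * Gk (length vs) z) = 0" by (rule moments[OF cGk VG lv])
    have cP: "continuous_on sbox (\<lambda>z. complex_of_real (\<Prod>i<k. lower (Lz z) (a i)) * \<Sigma>k k (Lz z))"
    proof -
      have "continuous_on sbox (\<lambda>z. complex_of_real (prodf vs z) * Gk k z)"
        by (intro continuous_intros continuous_prodf cGk)
      then show ?thesis by (simp add: pv Sk1 Gk_def)
    qed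
    have "null_int (\<lambda>l. complex_of_real (\<Prod>i<k. lower l (a i)) * \<Sigma>k k l) =
        Iz (\<lambda>z. complex_of_real (\<Prod>i<k. lower (Lz z) (a i)) * \<Sigma>k k (Lz z))"
      by (rule null_int_Iz[OF cP])
    also have "\<dots> = Iz (\<lambda>z. of_real (prodf vs z) * Gk (length vs) z)"
    proof -
      have lvk: "length vs = k" by (simp add: vs_def)
      show ?thesis unfolding lvk pv Sk1 Gk_def ..
    qed
    also have "\<dots> = 0" by (rule M)
    finally show "null_int (\<lambda>l. complex_of_real (\<Prod>i<k. lower l (a i)) * \<Sigma>k k l) = 0" .
  qed
qed


end
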